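(* Let $d,k\in\mathbb{N}$, $R>0$, and fix arbitrary constants $\varepsilon_j>0$ for the integers $1\le j<\frac d2+1$. Then $$\|\mathbf f\|_{\mathfrak E^k(\mathbb{B}^d_R)}\simeq \|(f_1,f_2)\|_{H^k(\mathbb{B}^d_R)\times H^{k-1}(\mathbb{B}^d_R)}$$ for all $\mathbf f=(f_1,f_2)\in C^\infty(\overline{\mathbb{B}^d_R})^2$ (in particular $(\cdot|\cdot)_{\mathfrak E^k}$ is an inner product).
   Context: $\mathbb{B}^d_R$ is the open ball of radius $R$, $\mathbb{S}^{d-1}_R$ its boundary sphere with surface measure, $C^\infty(\overline{\mathbb{B}^d_R})$ the smooth functions with all derivatives continuous up to the boundary; Einstein summation. Define $\mathbf D_0\mathbf f=(f_2,\Delta f_1)$, $\mathbf D_i\mathbf f=(\partial_if_1,\partial_if_2)$, $i=1,\dots,d$. Sesquilinear forms are defined recursively: $(\mathbf f|\mathbf g)_{\mathfrak E^1}=\int_{\mathbb{B}^d_R}\overline{\partial^if_1}\partial_ig_1+\int_{\mathbb{B}^d_R}\overline{f_2}g_2+\frac{2\varepsilon_1}{R}\int_{\mathbb{S}^{d-1}_R}\overline{f_1}g_1$; for $2\le k<\frac d2+1$: $(\mathbf f|\mathbf g)_{\mathfrak E^k}=\sum_{\mu=0}^d(\mathbf D_\mu\mathbf f|\mathbf D_\mu\mathbf g)_{\mathfrak E^{k-1}}+\frac{2\varepsilon_k}{R}\int_{\mathbb{S}^{d-1}_R}\overline{f_1}g_1$; for $k\ge\frac d2+1$: $(\mathbf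 f|\mathbf g)_{\mathfrak E^k}=\sum_{\mu=0}^d(\mathbf D_\mu\mathbf f|\mathbf D_\mu\mathbf g)_{\mathfrak E^{k-1}}+(\mathbf f|\mathbf g)_{\mathfrak E^{k-1}}$. $\|\mathbf f\|_{\mathfrak E^k}=(\mathbf f|\mathbf f)^{1/2}_{\mathfrak E^k}$. $H^k(\mathbb{B}^d_R)$ is the standard Sobolev space (completion of $C^\infty(\overline{\mathbb{B}^d_R})$), $H^0=L^2$. *)

theory Defs
  imports "HOL-Analysis.Analysis"
begin

type_synonym 'n cfun = "real^'n \<Rightarrow> complex"

definition pd :: "'n::finite \<Rightarrow> 'n cfun \<Rightarrow> 'n cfun" where
  "pd i f x = vector_derivative (\<lambda>t. f (x + t *\<^sub>R axis i 1)) (at 0)"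

fun pds :: "'n::finite list \<Rightarrow> 'n cfun \<Rightarrow> 'n cfun" where
  "pds [] f = f"
| "pds (i # is) f = pd i (pds is f)"

definition laplacian :: "'n::finite cfun \<Rightarrow> 'n cfun" where
  "laplacian f = (\<lambda>x. \<Sum>i\<in>UNIV. pd i (pd i f) x)"

text \<open>C-infinity up to the boundary of the closed ball: smooth in the open ball and
  every partial derivative extends continuously to the closed ball.\<close>
definition smooth_cball :: "real \<Rightarrow> 'n::finite cfun \<Rightarrow> bool" where
  "smooth_cball R f \<longleftrightarrow>
     (\<forall>is. (\<forall>x\<in>ball 0 R. pds is f differentiable (at x)) \<and>
           (\<exists>g. continuous_on (cball 0 R) g \<and> (\<forall>x\<in>ball 0 R. g x = pds is f x)))"

definition ball_int :: "real \<Rightarrow> 'n::finite cfun \<Rightarrow> complex" where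
  "ball_int R g = set_lebesgue_integral lborel (ball 0 R) g"

text \<open>Integral over the sphere of radius R w.r.t. surface measure, defined via the
  coarea formula: d/dr of the ball integral, taken from inside.\<close>
definition sphere_int :: "real \<Rightarrow> 'n::finite cfun \<Rightarrow> complex" where
  "sphere_int R g = Lim (at_left R)
      (\<lambda>r. (ball_int R g - ball_int r g) / complex_of_real (R - r))"

definition D0 :: "'n::finite cfun \<times> 'n cfun \<Rightarrow> 'n cfun \<times> 'n cfun" where
  "D0 f = (snd f, laplacian (fst f))"

definition Di :: "'n::finite \<Rightarrow> 'n cfun \<times> 'n cfun \<Rightarrow> 'n cfun \<times> 'n cfun" where
  "Di i f = (pd i (fst f), pd i (snd f))"

text \<open>The sesquilinear forms (f|g)_{E^k}; the value at k = 0 is unused.\<close>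
fun Eform :: "(nat \<Rightarrow> real) \<Rightarrow> real \<Rightarrow> nat \<Rightarrow> 'n::finite cfun \<times> 'n cfun \<Rightarrow> 'n cfun \<times> 'n cfun \<Rightarrow> complex" where
  "Eform eps R 0 f g = 0"
| "Eform eps R (Suc 0) f g =
     ball_int R (\<lambda>x. \<Sum>i\<in>UNIV. cnj (pd i (fst f) x) * pd i (fst g) x)
     + ball_int R (\<lambda>x. cnj (snd f x) * snd g x)
     + complex_of_real (2 * eps 1 / R) * sphere_int R (\<lambda>x. cnj (fst f x) * fst g x)"
| "Eform eps R (Suc (Suc m)) f g =
     Eform eps R (Suc m) (D0 f) (D0 g) + (\<Sum>i\<in>UNIV. Eform eps R (Suc m) (Di i f) (Di i g))
     + (if real (Suc (Suc m)) < real CARD('n) / 2 + 1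
        then complex_of_real (2 * eps (Suc (Suc m)) / R) * sphere_int R (\<lambda>x. cnj (fst f x) * fst g x)
        else Eform eps R (Suc m) f g)"

definition Enorm :: "(nat \<Rightarrow> real) \<Rightarrow> real \<Rightarrow> nat \<Rightarrow> 'n::finite cfun \<times> 'n cfun \<Rightarrow> real" where
  "Enorm eps R k f = sqrt (Re (Eform eps R k f f))"

definition Hnorm :: "real \<Rightarrow> nat \<Rightarrow> 'n::finite cfun \<Rightarrow> real" where
  "Hnorm R k f = sqrt (\<Sum>j\<le>k. \<Sum>is\<in>{is::'n list. length is = j}.
       set_lebesgue_integral lborel (ball 0 R) (\<lambda>x. (cmod (pds is f x))\<^sup>2))"

definition HHnorm :: "real \<Rightarrow> nat \<Rightarrow> 'n::finite cfun \<times> 'n cfun \<Rightarrow> real" where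
  "HHnorm R k f = sqrt ((Hnorm R k (fst f))\<^sup>2 + (Hnorm R (k - 1) (snd f))\<^sup>2)"

end

theory Submission
  imports Defs
begin

lemma pds_append: "pds (is @ js) f = pds is (pds js f)"
  by (induction "is") auto

lemma pd_has_derivative:
  assumes "(f has_derivative f') (at x)"
  shows "pd i f x = f' (axis i 1)"
proof -
  have l: "linear f'" using assms has_derivative_linear by blast
  have "((\<lambda>t. x + t *\<^sub>R axis i 1) has_derivative (\<lambda>t. t *\<^sub>R axis i 1)) (at 0)"
    by (auto intro!: derivative_eq_intros)
  moreover have "(f has_derivative f') (at (x + 0 *\<^sub>R axis i 1))" using assms by simp
  ultimately have "((\<lambda>t. f (x + t *\<^sub>R axis i 1)) has_derivative (\<lambda>t. f' (t *\<^sub>R axis i 1))) (at 0)"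
    using has_derivative_compose[of "\<lambda>t. x + t *\<^sub>R axis i 1" _ 0 UNIV f] by (simp add: o_def)
  then have "((\<lambda>t. f (x + t *\<^sub>R axis i 1)) has_vector_derivative f' (axis i 1)) (at 0)"
    unfolding has_vector_derivative_def using l by (simp add: linear_scale)
  then show ?thesis unfolding pd_def by (rule vector_derivative_at)
qed

lemma pd_local:
  assumes "open S" "x \<in> S" "\<And>y. y \<in> S \<Longrightarrow> f y = g y"
  shows "pd i f x = pd i g x"
proof -
  obtain e where e: "e > 0" "ball x e \<subseteq> S" using assms openE by blast
  define T where "T = ball (0::real) e"
  have oT: "open T" unfolding T_def by simp
  have T0: "0 \<in> T" using e unfolding T_def by auto
  have eq: "f (x + t *\<^sub>R axis i 1) = g (x + t *\<^sub>R axis i 1)" if "t \<in> T" for t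
  proof -
    have "x + t *\<^sub>R axis i 1 \<in> ball x e" using that unfolding T_def by (auto simp: dist_norm)
    then show ?thesis using e assms(3) by auto
  qed
  have "\<And>v. ((\<lambda>t. f (x + t *\<^sub>R axis i 1)) has_vector_derivative v) (at 0) \<longleftrightarrow>
             ((\<lambda>t. g (x + t *\<^sub>R axis i 1)) has_vector_derivative v) (at 0)"
  proof
    fix v
    assume "((\<lambda>t. f (x + t *\<^sub>R axis i 1)) has_vector_derivative v) (at 0)"
    then show "((\<lambda>t. g (x + t *\<^sub>R axis i 1)) has_vector_derivative v) (at 0)"
      by (rule has_vector_derivative_transform_within_open[OF _ oT T0]) (simp add: eq)
  next
    fix v
    assume "((\<lambda>t. g (x + t *\<^sub>R axis i 1)) has_vector_derivative v) (at 0)"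
    then show "((\<lambda>t. f (x + t *\<^sub>R axis i 1)) has_vector_derivative v) (at 0)"
      by (rule has_vector_derivative_transform_within_open[OF _ oT T0]) (simp add: eq)
  qed
  then show ?thesis unfolding pd_def vector_derivative_def by simp
qed

lemma pds_local:
  assumes "open S" "\<And>y. y \<in> S \<Longrightarrow> f y = g y"
  shows "x \<in> S \<Longrightarrow> pds is f x = pds is g x"
proof (induction "is" arbitrary: x)
  case Nil then show ?case using assms by simp
next
  case (Cons i js)
  then show ?case using pd_local[OF assms(1) Cons.prems, of "pds js f" "pds js g"] by simp
qed

lemma pd_sum:
  assumes "finite A" "\<And>j. j \<in> A \<Longrightarrow> (F j) differentiable (at x)"
  shows "pd i (\<lambda>y. \<Sum>j\<in>A. F j y) x = (\<Sum>j\<in>A. pd i (F j) x)"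
proof -
  obtain D where D: "\<And>j. j \<in> A \<Longrightarrow> (F j has_derivative D j) (at x)"
    using assms(2) unfolding differentiable_def by metis
  have "((\<lambda>y. \<Sum>j\<in>A. F j y) has_derivative (\<lambda>v. \<Sum>j\<in>A. D j v)) (at x)"
    using D by (intro has_derivative_sum) auto
  then have "pd i (\<lambda>y. \<Sum>j\<in>A. F j y) x = (\<Sum>j\<in>A. D j (axis i 1))"
    by (rule pd_has_derivative)
  also have "\<dots> = (\<Sum>j\<in>A. pd i (F j) x)"
  proof (intro sum.cong refl)
    fix j assume "j \<in> A"
    show "D j (axis i 1) = pd i (F j) x" using pd_has_derivative[OF D[OF \<open>j \<in> A\<close>]] by simp
  qed
  finally show ?thesis .
qed

definition ext_on :: "real \<Rightarrow> (real^'n::finite \<Rightarrow> 'b::topological_space) \<Rightarrow> bool" where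
  "ext_on R g \<longleftrightarrow> (\<exists>G. continuous_on (cball 0 R) G \<and> (\<forall>x\<in>ball 0 R. G x = g x))"

lemma smooth_ext: "smooth_cball R f \<Longrightarrow> ext_on R (pds is f)"
  unfolding smooth_cball_def ext_on_def by blast

lemma smooth_diff: "smooth_cball R f \<Longrightarrow> x \<in> ball 0 R \<Longrightarrow> pds is f differentiable (at x)"
  unfolding smooth_cball_def by blast

lemma smooth_diff0: "smooth_cball R f \<Longrightarrow> x \<in> ball 0 R \<Longrightarrow> f differentiable (at x)"
  using smooth_diff[of R f x "[]"] by simp

lemma ext_cont: "ext_on R g \<Longrightarrow> continuous_on (ball 0 R) g"
proof -
  assume "ext_on R g"
  then obtain G where G: "continuous_on (cball 0 R) G" "\<forall>x\<in>ball 0 R. G x = g x"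
    unfolding ext_on_def by blast
  have "continuous_on (ball 0 R) G" using G(1) by (rule continuous_on_subset) auto
  then show ?thesis using G(2) continuous_on_cong by (metis (no_types, lifting))
qed

lemma ext_bounded:
  fixes g :: "real^'n::finite \<Rightarrow> 'b::real_normed_vector"
  assumes "ext_on R g" shows "\<exists>M. \<forall>x\<in>ball 0 R. norm (g x) \<le> M"
proof -
  obtain G where G: "continuous_on (cball 0 R) G" "\<forall>x\<in>ball 0 R. G x = g x"
    using assms unfolding ext_on_def by blast
  have "compact (G ` cball 0 R)" using G(1) by (intro compact_continuous_image) auto
  then obtain M where "\<forall>y\<in>G ` cball 0 R. norm y \<le> M"
    using compact_imp_bounded bounded_iff by metis
  then have "\<forall>x\<in>ball 0 R. norm (g x) \<le> M" using G(2) by (metis ball_subset_cball image_eqI subsetD)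
  then show ?thesis by blast
qed

lemma ext_integrable:
  fixes g :: "real^'n::finite \<Rightarrow> 'b::{banach, second_countable_topology}"
  assumes "ext_on R g" shows "set_integrable lborel (ball 0 R) g"
proof -
  obtain G where G: "continuous_on (cball 0 R) G" "\<forall>x\<in>ball 0 R. G x = g x"
    using assms unfolding ext_on_def by blast
  have "integrable lborel (\<lambda>x. indicator (cball 0 R) x *\<^sub>R G x)"
    using G(1) by (intro borel_integrable_compact) auto
  then have "set_integrable lborel (cball 0 R) G" unfolding set_integrable_def .
  then have "set_integrable lborel (ball 0 R) G" by (rule set_integrable_subset) auto
  moreover have "(\<lambda>x. indicator (ball 0 R) x *\<^sub>R G x) = (\<lambda>x. indicator (ball 0 R) x *\<^sub>R g x)"
  proof (rule ext)
    fix x show "indicator (ball 0 R) x *\<^sub>R G x = indicator (ball 0 R) x *\<^sub>R g x"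
      using G(2) by (cases "x \<in> ball 0 R") simp_all
  qed
  ultimately show ?thesis unfolding set_integrable_def by simp
qed

lemma ext_const: "ext_on R (\<lambda>x. c)"
  unfolding ext_on_def by (intro exI[of _ "\<lambda>x. c"]) auto

lemma ext_global: "continuous_on UNIV g \<Longrightarrow> ext_on R g"
  unfolding ext_on_def by (intro exI[of _ g]) (auto intro: continuous_on_subset)

lemma ext_comp2:
  assumes "ext_on R a" "ext_on R b" "continuous_on UNIV (\<lambda>p. h (fst p) (snd p))"
  shows "ext_on R (\<lambda>x. h (a x) (b x))"
proof -
  obtain A where A: "continuous_on (cball 0 R) A" "\<forall>x\<in>ball 0 R. A x = a x"
    using assms unfolding ext_on_def by blast
  obtain B where B: "continuous_on (cball 0 R) B" "\<forall>x\<in>ball 0 R. B x = b x"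
    using assms unfolding ext_on_def by blast
  have "continuous_on (cball 0 R) (\<lambda>x. (A x, B x))" using A B by (intro continuous_intros)
  then have "continuous_on (cball 0 R) ((\<lambda>p. h (fst p) (snd p)) \<circ> (\<lambda>x. (A x, B x)))"
    by (rule continuous_on_compose) (rule continuous_on_subset[OF assms(3)], simp)
  then show ?thesis unfolding ext_on_def using A B by (intro exI[of _ "\<lambda>x. h (A x) (B x)"]) (auto simp: o_def)
qed

lemma ext_comp:
  assumes "ext_on R a" "continuous_on UNIV h"
  shows "ext_on R (\<lambda>x. h (a x))"
proof -
  have "continuous_on UNIV (\<lambda>p::('b \<times> 'b). h (fst p))"
    by (rule continuous_on_compose2[OF assms(2)]) (auto intro: continuous_intros)
  then show ?thesis using ext_comp2[OF assms(1) assms(1), of "\<lambda>u v. h u"] by simp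
qed

lemma ext_add:
  fixes a b :: "real^'n::finite \<Rightarrow> 'b::real_normed_vector"
  shows "ext_on R a \<Longrightarrow> ext_on R b \<Longrightarrow> ext_on R (\<lambda>x. a x + b x)"
  by (rule ext_comp2) (auto intro!: continuous_intros)

lemma ext_mult:
  fixes a b :: "real^'n::finite \<Rightarrow> 'b::real_normed_algebra"
  shows "ext_on R a \<Longrightarrow> ext_on R b \<Longrightarrow> ext_on R (\<lambda>x. a x * b x)"
  by (rule ext_comp2) (auto intro!: continuous_intros)

lemma ext_scaleR:
  fixes a :: "real^'n::finite \<Rightarrow> real" and b :: "real^'n::finite \<Rightarrow> 'b::real_normed_vector"
  shows "ext_on R a \<Longrightarrow> ext_on R b \<Longrightarrow> ext_on R (\<lambda>x. a x *\<^sub>R b x)"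
  by (rule ext_comp2) (auto intro!: continuous_intros)

lemma ext_cnj: "ext_on R a \<Longrightarrow> ext_on R (\<lambda>x. cnj (a x))"
  by (rule ext_comp) (auto intro!: continuous_intros)

lemma ext_norm:
  fixes a :: "real^'n::finite \<Rightarrow> 'b::real_normed_vector"
  shows "ext_on R a \<Longrightarrow> ext_on R (\<lambda>x. norm (a x))"
  by (rule ext_comp) (auto intro!: continuous_intros)

lemma ext_pow:
  fixes a :: "real^'n::finite \<Rightarrow> 'b::real_normed_algebra_1"
  shows "ext_on R a \<Longrightarrow> ext_on R (\<lambda>x. (a x)^k)"
  by (rule ext_comp) (auto intro!: continuous_intros)

lemma ext_of_real: "ext_on R a \<Longrightarrow> ext_on R (\<lambda>x. complex_of_real (a x))"
  by (rule ext_comp) (auto intro!: continuous_intros)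

lemma ext_sum:
  fixes a :: "'i \<Rightarrow> real^'n::finite \<Rightarrow> 'b::real_normed_vector"
  assumes "finite I" "\<And>i. i \<in> I \<Longrightarrow> ext_on R (a i)"
  shows "ext_on R (\<lambda>x. \<Sum>i\<in>I. a i x)"
  using assms
proof (induction I rule: finite_induct)
  case empty then show ?case by (simp add: ext_const)
next
  case (insert i I)
  then show ?case by (simp add: ext_add)
qed

lemma ext_coord: "ext_on R (\<lambda>x::real^'n::finite. x $ i)"
  by (rule ext_global) (auto intro!: continuous_intros)

lemma set_integral_sum':
  fixes f :: "'i \<Rightarrow> 'a \<Rightarrow> 'b::{banach, second_countable_topology}"
  assumes "finite I" "\<And>i. i \<in> I \<Longrightarrow> set_integrable M A (f i)"
  shows "(LINT x:A|M. (\<Sum>i\<in>I. f i x)) = (\<Sum>i\<in>I. LINT x:A|M. f i x)"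
proof -
  have "(\<lambda>x. indicator A x *\<^sub>R (\<Sum>i\<in>I. f i x)) = (\<lambda>x. \<Sum>i\<in>I. indicator A x *\<^sub>R f i x)"
    by (simp add: scaleR_sum_right)
  moreover have "integral\<^sup>L M (\<lambda>x. \<Sum>i\<in>I. indicator A x *\<^sub>R f i x) = (\<Sum>i\<in>I. integral\<^sup>L M (\<lambda>x. indicator A x *\<^sub>R f i x))"
    by (rule Bochner_Integration.integral_sum[where I=I and M=M and f="\<lambda>i x. indicator A x *\<^sub>R f i x"]) (use assms in \<open>auto simp: set_integrable_def\<close>)
  ultimately show ?thesis unfolding set_lebesgue_integral_def by simp
qed

lemma set_integral_nonneg':
  fixes f :: "'a \<Rightarrow> real"
  assumes "\<And>x. x \<in> A \<Longrightarrow> 0 \<le> f x"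
  shows "0 \<le> (LINT x:A|M. f x)"
  unfolding set_lebesgue_integral_def
  by (rule integral_nonneg_AE) (use assms in \<open>auto simp: indicator_def\<close>)

lemma differentiable_transform_open:
  assumes "f differentiable (at x)" "open S" "x \<in> S" "\<And>y. y \<in> S \<Longrightarrow> f y = g y"
  shows "g differentiable (at x)"
  using assms has_derivative_transform_within_open unfolding differentiable_def by metis

lemma smooth_pd: "smooth_cball R f \<Longrightarrow> smooth_cball R (pd i f)"
  unfolding smooth_cball_def
  using pds_append[of _ "[i]" f] by (metis pds.simps)

lemma pds_sum:
  fixes F :: "'j \<Rightarrow> real^'n::finite \<Rightarrow> complex"
  assumes "finite A" "\<And>j. j \<in> A \<Longrightarrow> smooth_cball R (F j)"
  shows "x \<in> ball 0 R \<Longrightarrow> pds is (\<lambda>y. \<Sum>j\<in>A. F j y) x = (\<Sum>j\<in>A. pds is (F j) x)"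
proof (induction "is" arbitrary: x)
  case Nil then show ?case by simp
next
  case (Cons i js)
  have "pds (i # js) (\<lambda>y. \<Sum>j\<in>A. F j y) x = pd i (pds js (\<lambda>y. \<Sum>j\<in>A. F j y)) x" by simp
  also have "\<dots> = pd i (\<lambda>y. \<Sum>j\<in>A. pds js (F j) y) x"
    by (rule pd_local[of "ball 0 R"]) (use Cons in auto)
  also have "\<dots> = (\<Sum>j\<in>A. pd i (pds js (F j)) x)"
    by (rule pd_sum[OF assms(1)], rule smooth_diff[OF assms(2) Cons.prems], assumption)
  finally show ?case by simp
qed

lemma smooth_sum:
  fixes F :: "'j \<Rightarrow> real^'n::finite \<Rightarrow> complex"
  assumes "finite A" "\<And>j. j \<in> A \<Longrightarrow> smooth_cball R (F j)"
  shows "smooth_cball R (\<lambda>y. \<Sum>j\<in>A. F j y)"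
  unfolding smooth_cball_def
proof (intro allI conjI ballI)
  fix "is" and x :: "real^'n" assume x: "x \<in> ball 0 R"
  have "((\<lambda>y. \<Sum>j\<in>A. pds is (F j) y) differentiable (at x))"
    by (rule differentiable_sum[OF assms(1)]) (use smooth_diff[OF assms(2) x] in blast)
  then show "pds is (\<lambda>y. \<Sum>j\<in>A. F j y) differentiable (at x)"
  proof (rule differentiable_transform_open[OF _ open_ball x])
    show "\<And>y. y \<in> ball 0 R \<Longrightarrow> (\<Sum>j\<in>A. pds is (F j) y) = pds is (\<lambda>y. \<Sum>j\<in>A. F j y) y"
      using pds_sum[OF assms] by simp
  qed
next
  fix "is"
  have "ext_on R (\<lambda>y. \<Sum>j\<in>A. pds is (F j) y)"
    using assms by (intro ext_sum smooth_ext) auto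
  then obtain G where G: "continuous_on (cball 0 R) G" "\<forall>x\<in>ball 0 R. G x = (\<Sum>j\<in>A. pds is (F j) x)"
    unfolding ext_on_def by blast
  then show "\<exists>g. continuous_on (cball 0 R) g \<and> (\<forall>x\<in>ball 0 R. g x = pds is (\<lambda>y. \<Sum>j\<in>A. F j y) x)"
    using pds_sum[OF assms] by (intro exI[of _ G]) auto
qed

lemma smooth_laplacian: "smooth_cball R f \<Longrightarrow> smooth_cball R (laplacian f)"
  unfolding laplacian_def by (intro smooth_sum smooth_pd) auto

lemma pds_laplacian:
  "smooth_cball R f \<Longrightarrow> x \<in> ball 0 R \<Longrightarrow> pds is (laplacian f) x = (\<Sum>i\<in>UNIV. pds (is @ [i, i]) f x)"
  unfolding laplacian_def
  by (subst pds_sum[of UNIV R]) (auto intro!: smooth_pd simp: pds_append)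

lemma ball_scale:
  fixes g :: "real^'n::finite \<Rightarrow> 'b::{banach, second_countable_topology}"
  assumes r: "r > 0" and g: "continuous_on (ball 0 r) g"
  shows "set_lebesgue_integral lborel (ball 0 r) g =
         (r ^ CARD('n)) *\<^sub>R set_lebesgue_integral lborel (ball 0 1) (\<lambda>y. g (r *\<^sub>R y))"
proof -
  define F where "F = (\<lambda>x. indicator (ball 0 r) x *\<^sub>R g x)"
  have Fm: "F \<in> borel_measurable borel"
    unfolding F_def by (rule borel_measurable_continuous_on_indicator) (use g in auto)
  have r0: "r \<noteq> 0" using r by simp
  note eq = lborel_affine[OF r0, of "0::real^'n"]
  have "integral\<^sup>L lborel F = integral\<^sup>L (density (distr lborel borel (\<lambda>x. 0 + r *\<^sub>R x)) (\<lambda>_. \<bar>r\<bar>^DIM(real^'n))) F"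
    by (rule arg_cong[where f="\<lambda>M. integral\<^sup>L M F", OF eq])
  also have "\<dots> = integral\<^sup>L (distr lborel borel (\<lambda>x. 0 + r *\<^sub>R x)) (\<lambda>x. (\<bar>r\<bar>^DIM(real^'n)) *\<^sub>R F x)"
    by (rule integral_density) (use Fm in auto)
  also have "\<dots> = integral\<^sup>L lborel (\<lambda>y. (\<bar>r\<bar>^DIM(real^'n)) *\<^sub>R F (0 + r *\<^sub>R y))"
    by (rule integral_distr) (use Fm in auto)
  also have "\<dots> = integral\<^sup>L lborel (\<lambda>y. (r ^ CARD('n)) *\<^sub>R (indicator (ball 0 1) y *\<^sub>R g (r *\<^sub>R y)))"
  proof -
    have "\<And>y::real^'n. (r *\<^sub>R y \<in> ball 0 r) = (y \<in> ball 0 1)" using r by (simp add: dist_norm mult_less_cancel_left1)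
    then show ?thesis using r unfolding F_def by (simp add: indicator_def)
  qed
  also have "\<dots> = (r ^ CARD('n)) *\<^sub>R set_lebesgue_integral lborel (ball 0 1) (\<lambda>y. g (r *\<^sub>R y))"
    unfolding set_lebesgue_integral_def by (rule integral_scaleR_right)
  finally show ?thesis unfolding F_def set_lebesgue_integral_def .
qed

lemma bdd_cont_integrable:
  fixes g :: "real^'n::finite \<Rightarrow> 'b::{banach, second_countable_topology}"
  assumes "continuous_on (ball 0 \<rho>) g" "\<And>x. x \<in> ball 0 \<rho> \<Longrightarrow> norm (g x) \<le> B"
  shows "set_integrable lborel (ball 0 \<rho>) g"
  unfolding set_integrable_def
proof (rule integrableI_bounded_set[where A="ball 0 \<rho>" and B=B])
  show "(\<lambda>x. indicator (ball 0 \<rho>) x *\<^sub>R g x) \<in> borel_measurable lborel"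
    using borel_measurable_continuous_on_indicator[OF _ assms(1)] by simp
  show "emeasure lborel (ball (0::real^'n) \<rho>) < \<infinity>" by (rule emeasure_bounded_finite) simp
  show "AE x in lborel. x \<in> ball 0 \<rho> \<longrightarrow> norm (indicator (ball 0 \<rho>) x *\<^sub>R g x) \<le> B"
    using assms(2) by simp
  show "AE x in lborel. x \<notin> ball 0 \<rho> \<longrightarrow> indicator (ball 0 \<rho>) x *\<^sub>R g x = 0"
    by simp
qed simp

lemma vd_quot:
  fixes g :: "real \<Rightarrow> 'b::real_normed_vector"
  assumes "(g has_vector_derivative v) (at s)"
  shows "((\<lambda>t. (g t - g s) /\<^sub>R (t - s)) \<longlongrightarrow> v) (at s)"
proof -
  have "((\<lambda>t. (g t - g s - (t - s) *\<^sub>R v) /\<^sub>R norm (t - s)) \<longlongrightarrow> 0) (at s)"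
    using assms unfolding has_vector_derivative_def has_derivative_at_within by simp
  then have lim: "((\<lambda>t. norm ((g t - g s - (t - s) *\<^sub>R v) /\<^sub>R norm (t - s))) \<longlongrightarrow> 0) (at s)"
    by (rule tendsto_norm_zero)
  have ev: "\<forall>\<^sub>F t in at s. norm ((g t - g s - (t - s) *\<^sub>R v) /\<^sub>R norm (t - s)) = norm ((g t - g s) /\<^sub>R (t - s) - v)"
  proof -
    have "\<forall>\<^sub>F t in at s. t \<noteq> s" by (simp add: eventually_at_filter)
    then show ?thesis
    proof (rule eventually_mono)
      fix t assume t: "t \<noteq> s"
      have "(g t - g s) /\<^sub>R (t - s) - v = (g t - g s - (t - s) *\<^sub>R v) /\<^sub>R (t - s)"
        using t by (simp add: scaleR_diff_right)
      then show "norm ((g t - g s - (t - s) *\<^sub>R v) /\<^sub>R norm (t - s)) = norm ((g t - g s) /\<^sub>R (t - s) - v)"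
        by simp
    qed
  qed
  have "((\<lambda>t. norm ((g t - g s) /\<^sub>R (t - s) - v)) \<longlongrightarrow> 0) (at s)"
    using tendsto_cong[OF ev, THEN iffD1, OF lim] .
  then have "((\<lambda>t. (g t - g s) /\<^sub>R (t - s) - v) \<longlongrightarrow> 0) (at s)"
    by (rule tendsto_norm_zero_cancel)
  then show ?thesis by (simp add: LIM_zero_iff)
qed

lemma vd_bound:
  fixes g :: "real \<Rightarrow> 'b::real_normed_vector"
  assumes "convex S" "\<And>s. s \<in> S \<Longrightarrow> (g has_vector_derivative g' s) (at s within S)"
    "\<And>s. s \<in> S \<Longrightarrow> norm (g' s) \<le> B" "a \<in> S" "b \<in> S"
  shows "norm (g b - g a) \<le> B * \<bar>b - a\<bar>"
proof -
  have "norm (g b - g a) \<le> B * norm (b - a)"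
  proof (rule differentiable_bound[OF assms(1), of g "\<lambda>s h. h *\<^sub>R g' s" B b a])
    show "\<And>x. x \<in> S \<Longrightarrow> (g has_derivative (\<lambda>h. h *\<^sub>R g' x)) (at x within S)"
      using assms(2) unfolding has_vector_derivative_def .
    show "\<And>x. x \<in> S \<Longrightarrow> onorm (\<lambda>h. h *\<^sub>R g' x) \<le> B"
    proof (rule onorm_le)
      fix x h assume "x \<in> S"
      then have "norm (g' x) \<le> B" by (rule assms(3))
      then show "norm (h *\<^sub>R g' x) \<le> B * norm h"
        by (simp add: mult.commute[of B] mult_left_mono)
    qed
  qed (use assms in auto)
  then show ?thesis by simp
qed

lemma deriv_formula:
  fixes f :: "real^'n::finite \<Rightarrow> complex"
  assumes "smooth_cball R f" "z \<in> ball 0 R"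
  shows "(f has_derivative (\<lambda>v. \<Sum>i\<in>UNIV. complex_of_real (v$i) * pd i f z)) (at z)"
proof -
  obtain D where D: "(f has_derivative D) (at z)"
    using smooth_diff0[OF assms] unfolding differentiable_def by blast
  have lin: "linear D" using D has_derivative_linear by blast
  have "D = (\<lambda>v. \<Sum>i\<in>UNIV. complex_of_real (v$i) * pd i f z)"
  proof (rule ext)
    fix v :: "real^'n"
    have "D v = D (\<Sum>i\<in>UNIV. v$i *\<^sub>R axis i 1)"
      using basis_expansion[of v] by (simp add: scalar_mult_eq_scaleR)
    also have "\<dots> = (\<Sum>i\<in>UNIV. v$i *\<^sub>R D (axis i 1))"
      using lin by (simp add: linear_sum linear_scale)
    also have "\<dots> = (\<Sum>i\<in>UNIV. complex_of_real (v$i) * pd i f z)"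
      using pd_has_derivative[OF D] by (simp add: scaleR_conv_of_real)
    finally show "D v = (\<Sum>i\<in>UNIV. complex_of_real (v$i) * pd i f z)" .
  qed
  then show ?thesis using D by simp
qed

lemma div_of_real_scaleR: "z / complex_of_real b = (1/b) *\<^sub>R z"
  by (simp add: scaleR_conv_of_real divide_inverse mult.commute of_real_inverse)

lemma scale_in_ball:
  fixes y :: "real^'n::finite"
  assumes "R > 0" "y \<in> ball 0 1" "0 \<le> s" "s \<le> R"
  shows "s *\<^sub>R y \<in> ball 0 R"
proof -
  have "norm y < 1" using assms by simp
  have "s * norm y \<le> R * norm y" using assms by (intro mult_right_mono) auto
  also have "\<dots> < R" using assms \<open>norm y < 1\<close> by simp
  finally show ?thesis using assms by simp
qed

definition Pf :: "(real^'n::finite \<Rightarrow> complex) \<Rightarrow> real^'n \<Rightarrow> complex" where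
  "Pf f x = (\<Sum>i\<in>UNIV. complex_of_real (x$i) * pd i f x)"

definition Qf :: "(real^'n::finite \<Rightarrow> complex) \<Rightarrow> real^'n \<Rightarrow> complex" where
  "Qf f x = cnj (Pf f x) * f x + cnj (f x) * Pf f x"

lemma ext_Pf: "smooth_cball R f \<Longrightarrow> ext_on R (Pf f)"
  unfolding Pf_def
proof (intro ext_sum ext_mult ext_of_real ext_coord)
  fix i assume "smooth_cball R f"
  then show "ext_on R (pd i f)" using smooth_ext[of R f "[i]"] by simp
qed simp

lemma ext_f: "smooth_cball R f \<Longrightarrow> ext_on R f"
  using smooth_ext[of R f "[]"] by simp

lemma ext_Qf: "smooth_cball R f \<Longrightarrow> ext_on R (Qf f)"
  unfolding Qf_def by (intro ext_add ext_mult ext_cnj ext_Pf ext_f)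

lemma psi_deriv:
  fixes f :: "real^'n::finite \<Rightarrow> complex"
  assumes R: "R > 0" and sm: "smooth_cball R f" and y: "y \<in> ball 0 1" and s: "0 \<le> s" "s \<le> R"
  defines "P1 \<equiv> (\<Sum>i\<in>UNIV. complex_of_real (y$i) * pd i f (s *\<^sub>R y))"
  shows "((\<lambda>t. (t ^ CARD('n)) *\<^sub>R (cnj (f (t *\<^sub>R y)) * f (t *\<^sub>R y))) has_vector_derivative
          ((real CARD('n) * s ^ (CARD('n) - 1)) *\<^sub>R (cnj (f (s *\<^sub>R y)) * f (s *\<^sub>R y))
           + (s ^ CARD('n)) *\<^sub>R (cnj P1 * f (s *\<^sub>R y) + cnj (f (s *\<^sub>R y)) * P1))) (at s)"
proof -
  have z: "s *\<^sub>R y \<in> ball 0 R" using scale_in_ball[OF R y s] .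
  have Df: "(f has_derivative (\<lambda>v. \<Sum>i\<in>UNIV. complex_of_real (v$i) * pd i f (s *\<^sub>R y))) (at (s *\<^sub>R y))"
    by (rule deriv_formula[OF sm z])
  have lin: "((\<lambda>t. t *\<^sub>R y) has_derivative (\<lambda>t. t *\<^sub>R y)) (at s)"
    by (auto intro!: derivative_eq_intros)
  have "((\<lambda>t. f (t *\<^sub>R y)) has_derivative (\<lambda>t. \<Sum>i\<in>UNIV. complex_of_real ((t *\<^sub>R y)$i) * pd i f (s *\<^sub>R y))) (at s)"
    using has_derivative_compose[OF lin Df] by (simp add: o_def)
  moreover have "(\<lambda>t. \<Sum>i\<in>UNIV. complex_of_real ((t *\<^sub>R y)$i) * pd i f (s *\<^sub>R y)) = (\<lambda>t. t *\<^sub>R P1)"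
    unfolding P1_def scaleR_sum_right
    by (intro ext sum.cong refl) (simp add: scaleR_conv_of_real[where 'a=complex])
  ultimately have g: "((\<lambda>t. f (t *\<^sub>R y)) has_vector_derivative P1) (at s)"
    unfolding has_vector_derivative_def by simp
  have h: "((\<lambda>t. cnj (f (t *\<^sub>R y)) * f (t *\<^sub>R y)) has_vector_derivative
            (cnj (f (s *\<^sub>R y)) * P1 + cnj P1 * f (s *\<^sub>R y))) (at s)"
    by (intro has_vector_derivative_mult has_vector_derivative_cnj g)
  have p: "((\<lambda>t. t ^ CARD('n)) has_field_derivative (real CARD('n) * s ^ (CARD('n) - 1))) (at s)"
    using DERIV_pow[of "CARD('n)" s UNIV] by simp
  show ?thesis
    by (rule has_vector_derivative_eq_rhs[OF has_vector_derivative_scaleR[OF p h]]) (simp add: algebra_simps)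
qed

lemma sphere_key:
  fixes f :: "real^'n::finite \<Rightarrow> complex"
  assumes R: "R > 0" and sm: "smooth_cball R f"
  shows "((\<lambda>r. (ball_int R (\<lambda>x. cnj (f x) * f x) - ball_int r (\<lambda>x. cnj (f x) * f x)) / complex_of_real (R - r))
     \<longlongrightarrow> (1/R) *\<^sub>R ball_int R (\<lambda>x. of_nat CARD('n) * (cnj (f x) * f x) + Qf f x)) (at_left R)"
proof -
  define d where "d = CARD('n)"
  have d1: "d \<ge> 1" unfolding d_def by simp
  define h where "h = (\<lambda>x. cnj (f x) * f x)"
  define P1 where "P1 s y = (\<Sum>i\<in>UNIV. complex_of_real (y$i) * pd i f (s *\<^sub>R y))" for s and y :: "real^'n"
  define \<psi> where "\<psi> y s = (s ^ d) *\<^sub>R h (s *\<^sub>R y)" for y s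
  define \<psi>' where "\<psi>' y s = (real d * s ^ (d - 1)) *\<^sub>R h (s *\<^sub>R y)
      + (s ^ d) *\<^sub>R (cnj (P1 s y) * f (s *\<^sub>R y) + cnj (f (s *\<^sub>R y)) * P1 s y)" for y s
  have dpsi: "(\<psi> y has_vector_derivative \<psi>' y s) (at s)" if "y \<in> ball 0 1" "0 \<le> s" "s \<le> R" for y s
    unfolding \<psi>_def \<psi>'_def h_def P1_def d_def by (rule psi_deriv[OF R sm that])
  have cf: "continuous_on (ball 0 R) f" using ext_cont[OF ext_f[OF sm]] .
  have ch: "continuous_on (ball 0 R) h" unfolding h_def by (intro continuous_intros cf)
  have chr: "continuous_on (ball 0 1) (\<lambda>y. h (r *\<^sub>R y))" if "0 \<le> r" "r \<le> R" for r
    by (rule continuous_on_compose2[OF ch]) (auto intro!: continuous_intros scale_in_ball[OF R _ that])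
  have cpsi: "continuous_on (ball 0 1) (\<lambda>y. \<psi> y r)" if "0 \<le> r" "r \<le> R" for r
    unfolding \<psi>_def by (intro continuous_intros chr that)
  obtain M0 where M0: "\<forall>x\<in>ball 0 R. norm (f x) \<le> M0" using ext_bounded[OF ext_f[OF sm]] by blast
  have eM1: "ext_on R (\<lambda>x. \<Sum>i\<in>UNIV. norm (pd i f x))"
  proof (intro ext_sum ext_norm)
    fix i show "ext_on R (pd i f)" using smooth_ext[OF sm, of "[i]"] by simp
  qed simp
  obtain M1 where M1: "\<forall>x\<in>ball 0 R. norm (\<Sum>i\<in>UNIV. norm (pd i f x)) \<le> M1"
    using ext_bounded[OF eM1] by blast
  have M0pos: "0 \<le> M0"
  proof -
    have "norm (f 0) \<le> M0" using M0 R by simp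
    then show ?thesis by (rule order_trans[OF norm_ge_zero])
  qed
  have M1pos: "0 \<le> M1"
  proof -
    have "norm (\<Sum>i\<in>UNIV. norm (pd i f 0)) \<le> M1" using M1 R by simp
    then show ?thesis by (rule order_trans[OF norm_ge_zero])
  qed
  have P1b: "norm (P1 s y) \<le> M1" if y: "y \<in> ball 0 1" and s: "0 \<le> s" "s \<le> R" for y s
  proof -
    have z: "s *\<^sub>R y \<in> ball 0 R" by (rule scale_in_ball[OF R y s])
    have "norm (P1 s y) \<le> (\<Sum>i\<in>UNIV. norm (complex_of_real (y$i) * pd i f (s *\<^sub>R y)))"
      unfolding P1_def by (rule norm_sum)
    also have "\<dots> \<le> (\<Sum>i\<in>UNIV. norm (pd i f (s *\<^sub>R y)))"
    proof (rule sum_mono)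
      fix i
      have "\<bar>y$i\<bar> \<le> 1" using component_le_norm_cart[of y i] y by simp
      then show "norm (complex_of_real (y$i) * pd i f (s *\<^sub>R y)) \<le> norm (pd i f (s *\<^sub>R y))"
        by (simp add: norm_mult mult_left_le_one_le)
    qed
    also have "\<dots> \<le> M1"
    proof -
      have "norm (\<Sum>i\<in>UNIV. norm (pd i f (s *\<^sub>R y))) \<le> M1" using M1 z by blast
      then show ?thesis by (metis (no_types) real_norm_def abs_ge_self order_trans)
    qed
    finally show ?thesis .
  qed
  have hb: "norm (h x) \<le> M0^2" if "x \<in> ball 0 R" for x
  proof -
    have "norm (h x) = (norm (f x))^2" unfolding h_def by (simp add: norm_mult power2_eq_square)
    also have "\<dots> \<le> M0^2" using M0 that by (intro power_mono) auto
    finally show ?thesis .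
  qed
  define B where "B = real d * R^(d-1) * M0^2 + R^d * (2 * M0 * M1)"
  have psib: "norm (\<psi>' y s) \<le> B" if y: "y \<in> ball 0 1" and s: "0 \<le> s" "s \<le> R" for y s
  proof -
    have z: "s *\<^sub>R y \<in> ball 0 R" by (rule scale_in_ball[OF R y s])
    have fz: "norm (f (s *\<^sub>R y)) \<le> M0" using M0 z by auto
    have pz: "norm (P1 s y) \<le> M1" by (rule P1b[OF y s])
    have t1: "norm ((real d * s ^ (d - 1)) *\<^sub>R h (s *\<^sub>R y)) \<le> real d * R^(d-1) * M0^2"
    proof -
      have "norm ((real d * s ^ (d - 1)) *\<^sub>R h (s *\<^sub>R y)) = real d * s^(d-1) * norm (h (s *\<^sub>R y))"
        using s by simp
      also have "\<dots> \<le> real d * R^(d-1) * M0^2"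
        using s hb[OF z] by (intro mult_mono power_mono mult_left_mono) auto
      finally show ?thesis .
    qed
    have t2: "norm ((s ^ d) *\<^sub>R (cnj (P1 s y) * f (s *\<^sub>R y) + cnj (f (s *\<^sub>R y)) * P1 s y)) \<le> R^d * (2 * M0 * M1)"
    proof -
      have "norm (cnj (P1 s y) * f (s *\<^sub>R y) + cnj (f (s *\<^sub>R y)) * P1 s y)
            \<le> norm (P1 s y) * norm (f (s *\<^sub>R y)) + norm (f (s *\<^sub>R y)) * norm (P1 s y)"
        by (rule order_trans[OF norm_triangle_ineq]) (simp add: norm_mult)
      also have "\<dots> \<le> M1 * M0 + M0 * M1"
        using fz pz M0pos M1pos by (intro add_mono mult_mono) auto
      finally have a: "norm (cnj (P1 s y) * f (s *\<^sub>R y) + cnj (f (s *\<^sub>R y)) * P1 s y) \<le> 2 * M0 * M1"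
        by simp
      have "norm ((s ^ d) *\<^sub>R (cnj (P1 s y) * f (s *\<^sub>R y) + cnj (f (s *\<^sub>R y)) * P1 s y))
          = s^d * norm (cnj (P1 s y) * f (s *\<^sub>R y) + cnj (f (s *\<^sub>R y)) * P1 s y)"
        using s by simp
      also have "\<dots> \<le> R^d * (2 * M0 * M1)"
        using s a M0pos M1pos by (intro mult_mono power_mono) auto
      finally show ?thesis .
    qed
    have "norm (\<psi>' y s) \<le> norm ((real d * s ^ (d - 1)) *\<^sub>R h (s *\<^sub>R y))
          + norm ((s ^ d) *\<^sub>R (cnj (P1 s y) * f (s *\<^sub>R y) + cnj (f (s *\<^sub>R y)) * P1 s y))"
      unfolding \<psi>'_def by (rule norm_triangle_ineq)
    also have "\<dots> \<le> B" unfolding B_def using t1 t2 by linarith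
    finally show ?thesis .
  qed
  have bi: "ball_int r h = (r^d) *\<^sub>R set_lebesgue_integral lborel (ball 0 1) (\<lambda>y. h (r *\<^sub>R y))"
    if "0 < r" "r \<le> R" for r
    unfolding ball_int_def d_def
  proof (rule ball_scale[OF that(1)])
    show "continuous_on (ball 0 r) h" by (rule continuous_on_subset[OF ch]) (use that in auto)
  qed
  have intg: "set_integrable lborel (ball 0 1) (\<lambda>y. \<psi> y r)" if "0 \<le> r" "r \<le> R" for r
  proof (rule bdd_cont_integrable[OF cpsi[OF that]])
    fix y :: "real^'n" assume y: "y \<in> ball 0 1"
    have "norm (\<psi> y r) = r^d * norm (h (r *\<^sub>R y))" unfolding \<psi>_def using that by simp
    also have "\<dots> \<le> R^d * M0^2"
      using that hb[OF scale_in_ball[OF R y that]] by (intro mult_mono power_mono) auto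
    finally show "norm (\<psi> y r) \<le> R^d * M0^2" .
  qed
  have quot: "(ball_int R h - ball_int r h) / complex_of_real (R - r)
      = integral\<^sup>L lborel (\<lambda>y. indicator (ball 0 1) y *\<^sub>R ((1/(R - r)) *\<^sub>R (\<psi> y R - \<psi> y r)))"
    if "0 < r" "r < R" for r
  proof -
    have "(ball_int R h - ball_int r h) / complex_of_real (R - r)
        = (1/(R - r)) *\<^sub>R (set_lebesgue_integral lborel (ball 0 1) (\<lambda>y. \<psi> y R)
             - set_lebesgue_integral lborel (ball 0 1) (\<lambda>y. \<psi> y r))"
      unfolding div_of_real_scaleR \<psi>_def using bi[of R] bi[of r] that R by simp
    also have "\<dots> = (1/(R - r)) *\<^sub>R set_lebesgue_integral lborel (ball 0 1) (\<lambda>y. \<psi> y R - \<psi> y r)"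
      using intg[of R] intg[of r] that R by (subst set_integral_diff(2)) auto
    also have "\<dots> = set_lebesgue_integral lborel (ball 0 1) (\<lambda>y. (1/(R - r)) *\<^sub>R (\<psi> y R - \<psi> y r))"
      by simp
    finally show ?thesis unfolding set_lebesgue_integral_def .
  qed
  define L where "L = integral\<^sup>L lborel (\<lambda>y. indicator (ball 0 1) y *\<^sub>R \<psi>' y R)"
  have lim: "((\<lambda>r. (ball_int R h - ball_int r h) / complex_of_real (R - r)) \<longlongrightarrow> L) (at_left R)"
  proof (rule tendsto_at_left_sequentially[of "R/2"])
    show "R/2 < R" using R by simp
  next
    fix S :: "nat \<Rightarrow> real"
    assume Slt: "\<And>n. S n < R" and Sgt: "\<And>n. R/2 < S n" and "incseq S" and Slim: "S \<longlonglongrightarrow> R"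
    have Spos: "0 < S n" for n using Sgt[of n] R by linarith
    have eqS: "(\<lambda>n. (ball_int R h - ball_int (S n) h) / complex_of_real (R - S n))
       = (\<lambda>n. integral\<^sup>L lborel (\<lambda>y. indicator (ball 0 1) y *\<^sub>R ((1/(R - S n)) *\<^sub>R (\<psi> y R - \<psi> y (S n)))))"
      using quot Slt Spos by auto
    have SatR: "filterlim S (at R) sequentially"
      unfolding filterlim_at using Slim Slt by (auto intro!: always_eventually simp: less_imp_neq)
    have pw: "(\<lambda>n. indicator (ball 0 1) y *\<^sub>R ((1/(R - S n)) *\<^sub>R (\<psi> y R - \<psi> y (S n))))
        \<longlonglongrightarrow> indicator (ball 0 1) y *\<^sub>R \<psi>' y R" for y
    proof (cases "y \<in> ball 0 1")
      case True
      have "((\<lambda>t. (\<psi> y t - \<psi> y R) /\<^sub>R (t - R)) \<longlongrightarrow> \<psi>' y R) (at R)"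
        by (rule vd_quot[OF dpsi[OF True]]) (use R in auto)
      then have "(\<lambda>n. (\<psi> y (S n) - \<psi> y R) /\<^sub>R (S n - R)) \<longlonglongrightarrow> \<psi>' y R"
        by (rule filterlim_compose[OF _ SatR])
      moreover have "(\<psi> y (S n) - \<psi> y R) /\<^sub>R (S n - R) = (1/(R - S n)) *\<^sub>R (\<psi> y R - \<psi> y (S n))" for n
      proof -
        have e: "inverse (S n - R) = - (1 / (R - S n))"
          by (simp add: inverse_eq_divide minus_divide_right)
        have "(\<psi> y (S n) - \<psi> y R) /\<^sub>R (S n - R) = (- (1 / (R - S n))) *\<^sub>R (\<psi> y (S n) - \<psi> y R)"
          unfolding e[symmetric] by simp
        also have "\<dots> = (1/(R - S n)) *\<^sub>R (\<psi> y R - \<psi> y (S n))"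
          by (simp add: scaleR_diff_right)
        finally show ?thesis .
      qed
      ultimately show ?thesis using True by simp
    next
      case False
      then show ?thesis by simp
    qed
    have meas: "(\<lambda>y. indicator (ball 0 1) y *\<^sub>R ((1/(R - S n)) *\<^sub>R (\<psi> y R - \<psi> y (S n)))) \<in> borel_measurable lborel" for n
    proof -
      have "continuous_on (ball 0 1) (\<lambda>y. (1/(R - S n)) *\<^sub>R (\<psi> y R - \<psi> y (S n)))"
        using Spos[of n] Slt[of n] R by (intro continuous_intros cpsi) auto
      from borel_measurable_continuous_on_indicator[OF _ this] show ?thesis by simp
    qed
    show "(\<lambda>n. (ball_int R h - ball_int (S n) h) / complex_of_real (R - S n)) \<longlonglongrightarrow> L"
      unfolding eqS L_def
    proof (rule integral_dominated_convergence[where w="\<lambda>y. B * indicator (ball 0 1) y"])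
      show "(\<lambda>y. indicator (ball 0 1) y *\<^sub>R \<psi>' y R) \<in> borel_measurable lborel"
        by (rule borel_measurable_LIMSEQ_metric[OF meas pw])
      show "\<And>n. (\<lambda>y. indicator (ball 0 1) y *\<^sub>R ((1/(R - S n)) *\<^sub>R (\<psi> y R - \<psi> y (S n)))) \<in> borel_measurable lborel"
        by (rule meas)
      show "integrable lborel (\<lambda>y::real^'n. B * indicator (ball 0 1) y)"
      proof (rule integrable_mult_right)
        show "integrable lborel (indicator (ball (0::real^'n) 1) :: real^'n \<Rightarrow> real)"
          by (rule integrable_real_indicator) (simp, rule emeasure_bounded_finite, simp)
      qed
      show "AE y in lborel. (\<lambda>n. indicator (ball 0 1) y *\<^sub>R ((1/(R - S n)) *\<^sub>R (\<psi> y R - \<psi> y (S n))))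
          \<longlonglongrightarrow> indicator (ball 0 1) y *\<^sub>R \<psi>' y R"
        by (rule AE_I2) (rule pw)
      show "AE y in lborel. norm (indicator (ball 0 1) y *\<^sub>R ((1/(R - S n)) *\<^sub>R (\<psi> y R - \<psi> y (S n))))
          \<le> B * indicator (ball 0 1) y" for n
      proof (rule AE_I2)
        fix y :: "real^'n"
        show "norm (indicator (ball 0 1) y *\<^sub>R ((1/(R - S n)) *\<^sub>R (\<psi> y R - \<psi> y (S n))))
          \<le> B * indicator (ball 0 1) y"
        proof (cases "y \<in> ball 0 1")
          case True
          have "norm (\<psi> y R - \<psi> y (S n)) \<le> B * \<bar>R - S n\<bar>"
          proof (rule vd_bound[of "{R/2..R}"])
            show "convex {R/2..R}" by simp
            fix s assume s: "s \<in> {R/2..R}"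
            then have s0: "0 \<le> s" "s \<le> R" using R by auto
            show "(\<psi> y has_vector_derivative \<psi>' y s) (at s within {R/2..R})"
              by (rule has_vector_derivative_at_within[OF dpsi[OF True s0]])
            show "norm (\<psi>' y s) \<le> B"
              by (rule psib[OF True s0])
          next
            show "S n \<in> {R/2..R}" "R \<in> {R/2..R}" using Sgt[of n] Slt[of n] R by auto
          qed
          moreover have "norm ((1/(R - S n)) *\<^sub>R (\<psi> y R - \<psi> y (S n))) = norm (\<psi> y R - \<psi> y (S n)) / (R - S n)"
            using Slt[of n] by simp
          ultimately have "norm ((1/(R - S n)) *\<^sub>R (\<psi> y R - \<psi> y (S n))) \<le> B"
            using Slt[of n] by (simp add: divide_le_eq)
          then show ?thesis using True by simp
        next
          case False
          then show ?thesis by simp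
        qed
      qed
    qed
  qed
  define \<phi> where "\<phi> = (\<lambda>x. of_nat d * h x + Qf f x)"
  have pt: "\<psi>' y R = (R^(d-1)) *\<^sub>R \<phi> (R *\<^sub>R y)" for y
  proof -
    have PR: "Pf f (R *\<^sub>R y) = complex_of_real R * P1 R y"
      unfolding Pf_def P1_def sum_distrib_left
      by (intro sum.cong refl) (simp add: scaleR_conv_of_real[where 'a=complex])
    have Rd: "R^d = R * R^(d-1)" using d1 by (cases d) auto
    show ?thesis
      unfolding \<psi>'_def \<phi>_def Qf_def PR Rd
      by (simp add: scaleR_conv_of_real[where 'a=complex] algebra_simps)
  qed
  have cphi: "continuous_on (ball 0 R) \<phi>"
    unfolding \<phi>_def h_def using ext_cont[OF ext_Qf[OF sm]] cf by (intro continuous_intros) auto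
  have L1: "L = (R^(d-1)) *\<^sub>R set_lebesgue_integral lborel (ball 0 1) (\<lambda>y. \<phi> (R *\<^sub>R y))"
  proof -
    have "(\<lambda>y. indicator (ball 0 1) y *\<^sub>R \<psi>' y R) = (\<lambda>y. (R^(d-1)) *\<^sub>R (indicator (ball 0 1) y *\<^sub>R \<phi> (R *\<^sub>R y)))"
      unfolding pt by (rule ext) (rule scaleR_left_commute)
    then show ?thesis unfolding L_def set_lebesgue_integral_def
      by (simp only: integral_scaleR_right)
  qed
  have L2: "ball_int R \<phi> = (R^d) *\<^sub>R set_lebesgue_integral lborel (ball 0 1) (\<lambda>y. \<phi> (R *\<^sub>R y))"
    unfolding ball_int_def d_def by (rule ball_scale[OF R cphi[unfolded d_def]])
  have "L = (1/R) *\<^sub>R ball_int R \<phi>"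
  proof -
    have Rd: "R^d = R * R^(d-1)" using d1 by (cases d) auto
    show ?thesis unfolding L1 L2 Rd using R by simp
  qed
  with lim show ?thesis unfolding h_def \<phi>_def d_def by simp
qed

definition L2 :: "real \<Rightarrow> (real^'n::finite \<Rightarrow> complex) \<Rightarrow> real" where
  "L2 R g = set_lebesgue_integral lborel (ball 0 R) (\<lambda>x. (cmod (g x))^2)"

definition Gr :: "real \<Rightarrow> (real^'n::finite \<Rightarrow> complex) \<Rightarrow> real" where
  "Gr R f = (\<Sum>i\<in>UNIV. L2 R (pd i f))"

lemma L2_nonneg: "0 \<le> L2 R g"
  unfolding L2_def by (rule set_integral_nonneg') simp

lemma ext_sq: "ext_on R g \<Longrightarrow> ext_on R (\<lambda>x. (cmod (g x))^2)"
  by (intro ext_pow ext_norm)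

lemma int_sq: "ext_on R g \<Longrightarrow> set_integrable lborel (ball 0 R) (\<lambda>x. (cmod (g x))^2)"
  by (intro ext_integrable ext_sq)

lemma ext_pd: "smooth_cball R f \<Longrightarrow> ext_on R (pd i f)"
  using smooth_ext[of R f "[i]"] by simp

lemma cnj_mult_self: "cnj z * z = complex_of_real ((cmod z)^2)"
  using complex_norm_square[of z] by (simp add: mult.commute)

lemma sphere_facts:
  fixes f :: "real^'n::finite \<Rightarrow> complex"
  assumes R: "R > 0" and sm: "smooth_cball R f"
  shows "\<exists>V. sphere_int R (\<lambda>x. cnj (f x) * f x) = complex_of_real V \<and> 0 \<le> V \<and>
     (real CARD('n) / 2) * L2 R f \<le> R * V + 2 * R^2 * Gr R f \<and>
     R * V \<le> (3/2 * real CARD('n)) * L2 R f + 2 * R^2 * Gr R f"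
proof -
  define d where "d = CARD('n)"
  define q where "q x = 2 * Re (cnj (f x) * Pf f x)" for x
  have hq: "of_nat d * (cnj (f x) * f x) + Qf f x = complex_of_real (real d * (cmod (f x))^2 + q x)" for x
    unfolding Qf_def q_def by (simp add: complex_eq_iff cmod_power2 algebra_simps power2_eq_square[symmetric])
  have ef: "ext_on R f" by (rule ext_f[OF sm])
  have eq: "ext_on R q" unfolding q_def
    by (intro ext_scaleR[of R "\<lambda>x. 2", simplified] ext_comp[where h=Re] ext_mult ext_cnj ef ext_Pf sm ext_const)
       (auto intro!: continuous_intros)
  have iF: "set_integrable lborel (ball 0 R) (\<lambda>x. (cmod (f x))^2)" by (rule int_sq[OF ef])
  have iq: "set_integrable lborel (ball 0 R) q" by (rule ext_integrable[OF eq])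
  have iP: "set_integrable lborel (ball 0 R) (\<lambda>x. (cmod (pd i f x))^2)" for i
    by (rule int_sq[OF ext_pd[OF sm]])
  define Iq where "Iq = set_lebesgue_integral lborel (ball 0 R) q"
  have hfun: "(\<lambda>x. cnj (f x) * f x) = (\<lambda>x. complex_of_real ((cmod (f x))^2))"
    by (simp add: cnj_mult_self)
  have bint: "ball_int r (\<lambda>x. cnj (f x) * f x) = complex_of_real (set_lebesgue_integral lborel (ball 0 r) (\<lambda>x. (cmod (f x))^2))" for r
    unfolding ball_int_def hfun by (rule set_integral_complex_of_real)
  have bint2: "ball_int R (\<lambda>x. of_nat d * (cnj (f x) * f x) + Qf f x) = complex_of_real (real d * L2 R f + Iq)"
  proof -
    have "ball_int R (\<lambda>x. of_nat d * (cnj (f x) * f x) + Qf f x)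
        = complex_of_real (set_lebesgue_integral lborel (ball 0 R) (\<lambda>x. real d * (cmod (f x))^2 + q x))"
      unfolding ball_int_def hq by (rule set_integral_complex_of_real)
    also have "set_lebesgue_integral lborel (ball 0 R) (\<lambda>x. real d * (cmod (f x))^2 + q x) = real d * L2 R f + Iq"
      unfolding L2_def Iq_def using iF iq by (subst set_integral_add(2)) auto
    finally show ?thesis .
  qed
  define V where "V = (1/R) * (real d * L2 R f + Iq)"
  have lim: "((\<lambda>r. (ball_int R (\<lambda>x. cnj (f x) * f x) - ball_int r (\<lambda>x. cnj (f x) * f x)) / complex_of_real (R - r))
     \<longlongrightarrow> complex_of_real V) (at_left R)"
    using sphere_key[OF R sm] unfolding bint2[unfolded d_def] V_def d_def
    by (simp add: scaleR_conv_of_real)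
  have sV: "sphere_int R (\<lambda>x. cnj (f x) * f x) = complex_of_real V"
    unfolding sphere_int_def by (rule tendsto_Lim[OF trivial_limit_at_left_real lim])
  have V0: "0 \<le> V"
  proof (rule tendsto_lowerbound)
    show "((\<lambda>r. Re ((ball_int R (\<lambda>x. cnj (f x) * f x) - ball_int r (\<lambda>x. cnj (f x) * f x)) / complex_of_real (R - r))) \<longlongrightarrow> V) (at_left R)"
      using tendsto_Re[OF lim] by simp
    show "\<not> trivial_limit (at_left R)" by simp
    have "\<forall>\<^sub>F r in at_left R. r \<in> {0<..<R}" by (rule eventually_at_left_real[OF R])
    then show "\<forall>\<^sub>F r in at_left R. 0 \<le> Re ((ball_int R (\<lambda>x. cnj (f x) * f x) - ball_int r (\<lambda>x. cnj (f x) * f x)) / complex_of_real (R - r))"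
    proof (rule eventually_mono)
      fix r assume r: "r \<in> {0<..<R}"
      have ir: "set_integrable lborel (ball 0 r) (\<lambda>x. (cmod (f x))^2)"
        by (rule set_integrable_subset[OF iF]) (use r in auto)
      have "set_lebesgue_integral lborel (ball 0 r) (\<lambda>x. (cmod (f x))^2) \<le> set_lebesgue_integral lborel (ball 0 R) (\<lambda>x. (cmod (f x))^2)"
        unfolding set_lebesgue_integral_def
      proof (rule integral_mono)
        show "integrable lborel (\<lambda>x. indicator (ball 0 r) x *\<^sub>R (cmod (f x))^2)" using ir unfolding set_integrable_def .
        show "integrable lborel (\<lambda>x. indicator (ball 0 R) x *\<^sub>R (cmod (f x))^2)" using iF unfolding set_integrable_def .
        fix x :: "real^'n"
        show "indicator (ball 0 r) x *\<^sub>R (cmod (f x))^2 \<le> indicator (ball 0 R) x *\<^sub>R (cmod (f x))^2"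
          using r by (auto simp: indicator_def)
      qed
      then show "0 \<le> Re ((ball_int R (\<lambda>x. cnj (f x) * f x) - ball_int r (\<lambda>x. cnj (f x) * f x)) / complex_of_real (R - r))"
        unfolding bint using r by (simp add: div_of_real_scaleR)
    qed
  qed
  define rhs where "rhs x = (real d / 2) * (cmod (f x))^2 + 2 * R^2 * (\<Sum>i\<in>UNIV. (cmod (pd i f x))^2)" for x
  have qb: "\<bar>q x\<bar> \<le> rhs x" if x: "x \<in> ball 0 R" for x
  proof -
    have a: "\<bar>Re (cnj (f x) * Pf f x)\<bar> \<le> cmod (cnj (f x) * Pf f x)" by (rule abs_Re_le_cmod)
    have "\<bar>q x\<bar> = 2 * \<bar>Re (cnj (f x) * Pf f x)\<bar>" unfolding q_def by (simp only: abs_mult abs_numeral)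
    then have "\<bar>q x\<bar> \<le> 2 * cmod (cnj (f x) * Pf f x)" using a by linarith
    also have "\<dots> = 2 * cmod (f x) * cmod (Pf f x)" by (simp add: norm_mult)
    also have "\<dots> \<le> 2 * cmod (f x) * (\<Sum>i\<in>UNIV. R * cmod (pd i f x))"
    proof (intro mult_left_mono)
      have "cmod (Pf f x) \<le> (\<Sum>i\<in>UNIV. cmod (complex_of_real (x$i) * pd i f x))"
        unfolding Pf_def by (rule norm_sum)
      also have "\<dots> \<le> (\<Sum>i\<in>UNIV. R * cmod (pd i f x))"
      proof (rule sum_mono)
        fix i
        have "\<bar>x$i\<bar> \<le> R" using component_le_norm_cart[of x i] x by simp
        then show "cmod (complex_of_real (x$i) * pd i f x) \<le> R * cmod (pd i f x)"
          by (simp add: norm_mult mult_right_mono)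
      qed
      finally show "cmod (Pf f x) \<le> (\<Sum>i\<in>UNIV. R * cmod (pd i f x))" .
    qed simp
    also have "\<dots> = (\<Sum>i\<in>UNIV. 2 * cmod (f x) * (R * cmod (pd i f x)))"
      by (simp add: sum_distrib_left)
    also have "\<dots> \<le> (\<Sum>i\<in>UNIV. (1/2) * (cmod (f x))^2 + 2 * R^2 * (cmod (pd i f x))^2)"
    proof (rule sum_mono)
      fix i
      have "0 \<le> (cmod (f x) - 2 * (R * cmod (pd i f x)))^2" by simp
      then show "2 * cmod (f x) * (R * cmod (pd i f x)) \<le> (1/2) * (cmod (f x))^2 + 2 * R^2 * (cmod (pd i f x))^2"
        by (simp add: power2_eq_square algebra_simps)
    qed
    also have "\<dots> = rhs x"
      unfolding rhs_def d_def by (simp add: sum.distrib sum_distrib_left)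
    finally show ?thesis .
  qed
  have irhs: "set_integrable lborel (ball 0 R) rhs"
    unfolding rhs_def
    by (intro ext_integrable ext_add ext_mult ext_const ext_sq ef ext_sum ext_pd sm) auto
  have Irhs: "set_lebesgue_integral lborel (ball 0 R) rhs = (real d / 2) * L2 R f + 2 * R^2 * Gr R f"
  proof -
    have "set_lebesgue_integral lborel (ball 0 R) rhs
       = (real d / 2) * L2 R f + 2 * R^2 * set_lebesgue_integral lborel (ball 0 R) (\<lambda>x. \<Sum>i\<in>UNIV. (cmod (pd i f x))^2)"
    proof -
      have iS: "set_integrable lborel (ball 0 R) (\<lambda>x. \<Sum>i\<in>UNIV. (cmod (pd i f x))^2)"
        by (intro ext_integrable ext_sum ext_sq ext_pd sm) auto
      have "set_lebesgue_integral lborel (ball 0 R) rhs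
         = set_lebesgue_integral lborel (ball 0 R) (\<lambda>x. (real d / 2) * (cmod (f x))^2)
           + set_lebesgue_integral lborel (ball 0 R) (\<lambda>x. 2 * R^2 * (\<Sum>i\<in>UNIV. (cmod (pd i f x))^2))"
        unfolding rhs_def
        by (rule set_integral_add(2)) (use iF iS in \<open>auto intro!: set_integrable_mult_right\<close>)
      then show ?thesis unfolding L2_def by simp
    qed
    also have "set_lebesgue_integral lborel (ball 0 R) (\<lambda>x. \<Sum>i\<in>UNIV. (cmod (pd i f x))^2) = Gr R f"
      unfolding Gr_def L2_def by (rule set_integral_sum') (use iP in auto)
    finally show ?thesis .
  qed
  have Iq1: "Iq \<le> (real d / 2) * L2 R f + 2 * R^2 * Gr R f"
    unfolding Iq_def Irhs[symmetric]
    by (rule set_integral_mono[OF iq irhs]) (use qb in force)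
  have Iq2: "- Iq \<le> (real d / 2) * L2 R f + 2 * R^2 * Gr R f"
  proof -
    have "set_lebesgue_integral lborel (ball 0 R) (\<lambda>x. - q x) \<le> set_lebesgue_integral lborel (ball 0 R) rhs"
      by (rule set_integral_mono[OF _ irhs]) (use qb iq in \<open>force simp: set_integrable_def\<close>)+
    then show ?thesis unfolding Iq_def Irhs by (simp add: set_integral_uminus[OF iq])
  qed
  have RV: "R * V = real d * L2 R f + Iq" unfolding V_def using R by simp
  show ?thesis
    using sV V0 RV Iq1 Iq2 unfolding d_def by (intro exI[of _ V]) auto
qed

definition H2 :: "real \<Rightarrow> nat \<Rightarrow> (real^'n::finite \<Rightarrow> complex) \<Rightarrow> real" where
  "H2 R k f = (\<Sum>j\<le>k. \<Sum>is\<in>{is::'n list. length is = j}. L2 R (pds is f))"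

lemma Hnorm_H2: "Hnorm R k f = sqrt (H2 R k f)"
  unfolding Hnorm_def H2_def L2_def ..

lemma H2_nonneg: "0 \<le> H2 R k f"
  unfolding H2_def by (intro sum_nonneg L2_nonneg)

lemma H2_0: "H2 R 0 f = L2 R f"
proof -
  have "{is::'n list. length is = 0} = {[]}" by auto
  then show ?thesis unfolding H2_def by simp
qed

lemma sum_lists_snoc:
  fixes F :: "'n::finite list \<Rightarrow> 'b::comm_monoid_add"
  shows "(\<Sum>is\<in>{is::'n list. length is = Suc j}. F is) = (\<Sum>i\<in>UNIV. \<Sum>js\<in>{js::'n list. length js = j}. F (js @ [i]))"
proof -
  have fin: "finite {js::'n list. length js = j}" using finite_lists_length_eq[of "UNIV::'n set" j] by simp
  have img: "{is::'n list. length is = Suc j} = (\<lambda>(js, i). js @ [i]) ` ({js. length js = j} \<times> UNIV)"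
  proof (intro set_eqI iffI)
    fix "is" :: "'n list" assume "is \<in> {is. length is = Suc j}"
    then have l: "length is = Suc j" by simp
    then have "is \<noteq> []" by auto
    then have "is = butlast is @ [last is]" by simp
    moreover have "length (butlast is) = j" using l by simp
    ultimately show "is \<in> (\<lambda>(js, i). js @ [i]) ` ({js. length js = j} \<times> UNIV)"
      by (intro image_eqI[of _ _ "(butlast is, last is)"]) auto
  qed auto
  have inj: "inj_on (\<lambda>(js, i). js @ [i]) ({js::'n list. length js = j} \<times> (UNIV::'n set))"
    by (auto simp: inj_on_def)
  have "(\<Sum>is\<in>{is::'n list. length is = Suc j}. F is) = (\<Sum>p\<in>{js::'n list. length js = j} \<times> UNIV. F (fst p @ [snd p]))"
    unfolding img by (subst sum.reindex[OF inj]) (auto intro!: sum.cong simp: case_prod_beta)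
  also have "\<dots> = (\<Sum>js\<in>{js::'n list. length js = j}. \<Sum>i\<in>UNIV. F (js @ [i]))"
    by (simp add: sum.cartesian_product')
  also have "\<dots> = (\<Sum>i\<in>UNIV. \<Sum>js\<in>{js::'n list. length js = j}. F (js @ [i]))"
    by (rule sum.swap)
  finally show ?thesis .
qed

lemma H2_Suc:
  fixes f :: "real^'n::finite \<Rightarrow> complex"
  shows "H2 R (Suc n) f = L2 R f + (\<Sum>i\<in>UNIV. H2 R n (pd i f))"
proof -
  have "H2 R (Suc n) f = (\<Sum>is\<in>{is::'n list. length is = 0}. L2 R (pds is f))
      + (\<Sum>j\<le>n. \<Sum>is\<in>{is::'n list. length is = Suc j}. L2 R (pds is f))"
    unfolding H2_def by (subst sum.atMost_Suc_shift) simp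
  also have "(\<Sum>is\<in>{is::'n list. length is = 0}. L2 R (pds is f)) = L2 R f"
  proof -
    have "{is::'n list. length is = 0} = {[]}" by auto
    then show ?thesis by simp
  qed
  also have "(\<Sum>j\<le>n. \<Sum>is\<in>{is::'n list. length is = Suc j}. L2 R (pds is f))
      = (\<Sum>j\<le>n. \<Sum>i\<in>UNIV. \<Sum>js\<in>{js::'n list. length js = j}. L2 R (pds js (pd i f)))"
    by (intro sum.cong refl) (simp add: sum_lists_snoc pds_append)
  also have "\<dots> = (\<Sum>i\<in>UNIV. H2 R n (pd i f))"
    unfolding H2_def by (rule sum.swap)
  finally show ?thesis .
qed

lemma L2_le_H2: "L2 R f \<le> H2 R n f"
  by (cases n) (simp_all add: H2_0 H2_Suc sum_nonneg H2_nonneg)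

lemma H2_mono: "H2 R n f \<le> H2 R (Suc n) f"
  unfolding H2_def by (rule sum_mono2) (auto intro: sum_nonneg L2_nonneg)

lemma sum_H2_pd_le: "(\<Sum>i\<in>UNIV. H2 R n (pd i f)) \<le> H2 R (Suc n) f"
  using H2_Suc[of R n f] L2_nonneg[of R f] by simp

lemma H2_pd_le: "H2 R n (pd i f) \<le> H2 R (Suc n) f"
proof -
  have "H2 R n (pd i f) \<le> (\<Sum>i\<in>UNIV. H2 R n (pd i f))"
    by (rule member_le_sum) (auto intro: H2_nonneg)
  then show ?thesis using sum_H2_pd_le[of R n f] by simp
qed

lemma Gr_le: "Gr R f \<le> (\<Sum>i\<in>UNIV. H2 R n (pd i f))"
  unfolding Gr_def by (intro sum_mono L2_le_H2)

lemma L2_laplacian: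
  fixes f :: "real^'n::finite \<Rightarrow> complex"
  assumes sm: "smooth_cball R f"
  shows "L2 R (pds is (laplacian f)) \<le> real CARD('n) * (\<Sum>i\<in>UNIV. L2 R (pds is (pd i (pd i f))))"
proof -
  have eq: "\<forall>x. x \<in> ball 0 R \<longrightarrow> (cmod (pds is (laplacian f) x))^2 = (cmod (\<Sum>i\<in>UNIV. pds is (pd i (pd i f)) x))^2"
    using pds_laplacian[OF sm] by (simp add: pds_append)
  have ii: "set_integrable lborel (ball 0 R) (\<lambda>x. (cmod (pds is (pd i (pd i f)) x))^2)" for i
    by (rule int_sq) (rule smooth_ext[OF smooth_pd[OF smooth_pd[OF sm]]])
  have "L2 R (pds is (laplacian f)) = set_lebesgue_integral lborel (ball 0 R) (\<lambda>x. (cmod (\<Sum>i\<in>UNIV. pds is (pd i (pd i f)) x))^2)"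
    unfolding L2_def by (rule set_lebesgue_integral_cong) (use eq in auto)
  also have "\<dots> \<le> set_lebesgue_integral lborel (ball 0 R) (\<lambda>x. real CARD('n) * (\<Sum>i\<in>UNIV. (cmod (pds is (pd i (pd i f)) x))^2))"
  proof (rule set_integral_mono)
    show "set_integrable lborel (ball 0 R) (\<lambda>x. (cmod (\<Sum>i\<in>UNIV. pds is (pd i (pd i f)) x))^2)"
      by (intro int_sq ext_sum smooth_ext smooth_pd sm) auto
    show "set_integrable lborel (ball 0 R) (\<lambda>x. real CARD('n) * (\<Sum>i\<in>UNIV. (cmod (pds is (pd i (pd i f)) x))^2))"
      by (intro set_integrable_mult_right ext_integrable ext_sum ext_sq smooth_ext smooth_pd sm) auto
    fix x :: "real^'n"
    have "cmod (\<Sum>i\<in>UNIV. pds is (pd i (pd i f)) x) \<le> (\<Sum>i\<in>UNIV. cmod (pds is (pd i (pd i f)) x))"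
      by (rule norm_sum)
    then have "(cmod (\<Sum>i\<in>UNIV. pds is (pd i (pd i f)) x))^2 \<le> (\<Sum>i\<in>UNIV. cmod (pds is (pd i (pd i f)) x))^2"
      by (intro power_mono) auto
    also have "\<dots> \<le> (\<Sum>i\<in>UNIV. (cmod (pds is (pd i (pd i f)) x))^2) * card (UNIV::'n set)"
      by (rule sum_squared_le_sum_of_squares)
    finally show "(cmod (\<Sum>i\<in>UNIV. pds is (pd i (pd i f)) x))^2 \<le> real CARD('n) * (\<Sum>i\<in>UNIV. (cmod (pds is (pd i (pd i f)) x))^2)"
      by (simp add: mult.commute)
  qed
  also have "\<dots> = real CARD('n) * (\<Sum>i\<in>UNIV. L2 R (pds is (pd i (pd i f))))"
    unfolding L2_def by (subst set_integral_mult_right) (simp add: set_integral_sum' ii)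
  finally show ?thesis .
qed

lemma H2_laplacian:
  fixes f :: "real^'n::finite \<Rightarrow> complex"
  assumes sm: "smooth_cball R f"
  shows "H2 R n (laplacian f) \<le> real CARD('n) * H2 R (Suc (Suc n)) f"
proof -
  have "H2 R n (laplacian f) \<le> (\<Sum>j\<le>n. \<Sum>is\<in>{is::'n list. length is = j}. real CARD('n) * (\<Sum>i\<in>UNIV. L2 R (pds is (pd i (pd i f)))))"
    unfolding H2_def by (intro sum_mono L2_laplacian[OF sm])
  also have "\<dots> = real CARD('n) * (\<Sum>i\<in>UNIV. H2 R n (pd i (pd i f)))"
    unfolding H2_def sum_distrib_left[symmetric]
    by (simp add: sum.swap[of _ UNIV] sum_distrib_left)
  also have "\<dots> \<le> real CARD('n) * (\<Sum>i\<in>UNIV. H2 R (Suc n) (pd i f))"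
    by (intro mult_left_mono sum_mono H2_pd_le) auto
  also have "\<dots> \<le> real CARD('n) * H2 R (Suc (Suc n)) f"
    by (intro mult_left_mono sum_H2_pd_le) auto
  finally show ?thesis .
qed

lemma ball_int_sq: "ball_int R (\<lambda>x. cnj (g x) * g x) = complex_of_real (L2 R g)"
  unfolding ball_int_def L2_def cnj_mult_self by (rule set_integral_complex_of_real)

lemma E1_re:
  fixes f1 f2 :: "real^'n::finite \<Rightarrow> complex"
  assumes sm1: "smooth_cball R f1" and V: "sphere_int R (\<lambda>x. cnj (f1 x) * f1 x) = complex_of_real V"
  shows "Re (Eform eps R (Suc 0) (f1, f2) (f1, f2)) = Gr R f1 + L2 R f2 + (2 * eps 1 / R) * V"
proof -
  have fe: "(\<lambda>x. \<Sum>i\<in>UNIV. cnj (pd i f1 x) * pd i f1 x) = (\<lambda>x. complex_of_real (\<Sum>i\<in>UNIV. (cmod (pd i f1 x))^2))"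
    by (simp add: cnj_mult_self)
  have a: "ball_int R (\<lambda>x. \<Sum>i\<in>UNIV. cnj (pd i f1 x) * pd i f1 x) = complex_of_real (Gr R f1)"
    unfolding ball_int_def fe set_integral_complex_of_real Gr_def L2_def
    by (subst set_integral_sum') (auto intro: int_sq ext_pd sm1)
  show ?thesis using a V by (simp add: ball_int_sq)
qed

lemma E2_re:
  fixes f :: "(real^'n::finite \<Rightarrow> complex) \<times> (real^'n \<Rightarrow> complex)"
  shows "Re (Eform eps R (Suc (Suc m)) f f) = Re (Eform eps R (Suc m) (D0 f) (D0 f))
    + (\<Sum>i\<in>UNIV. Re (Eform eps R (Suc m) (Di i f) (Di i f)))
    + (if real (Suc (Suc m)) < real CARD('n) / 2 + 1
       then (2 * eps (Suc (Suc m)) / R) * Re (sphere_int R (\<lambda>x. cnj (fst f x) * fst f x))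
       else Re (Eform eps R (Suc m) f f))"
  by simp

lemma sphere_bounds:
  fixes f :: "real^'n::finite \<Rightarrow> complex"
  assumes R: "R > 0" and sm: "smooth_cball R f"
  shows "\<exists>V. sphere_int R (\<lambda>x. cnj (f x) * f x) = complex_of_real V \<and> 0 \<le> V \<and>
     L2 R f \<le> (2 * R / real CARD('n)) * V + (4 * R^2 / real CARD('n)) * Gr R f \<and>
     V \<le> (3 * real CARD('n) / (2 * R)) * L2 R f + 2 * R * Gr R f"
proof -
  obtain V where V: "sphere_int R (\<lambda>x. cnj (f x) * f x) = complex_of_real V" "0 \<le> V"
     "(real CARD('n) / 2) * L2 R f \<le> R * V + 2 * R^2 * Gr R f"
     "R * V \<le> (3/2 * real CARD('n)) * L2 R f + 2 * R^2 * Gr R f"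
    using sphere_facts[OF R sm] by blast
  define d where "d = real CARD('n)"
  have d: "d > 0" unfolding d_def by simp
  have "L2 R f = (2 / d) * ((d / 2) * L2 R f)" using d by simp
  also have "\<dots> \<le> (2 / d) * (R * V + 2 * R^2 * Gr R f)"
    using V(3) d unfolding d_def by (intro mult_left_mono) auto
  also have "\<dots> = (2 * R / d) * V + (4 * R^2 / d) * Gr R f" by (simp add: algebra_simps)
  finally have 1: "L2 R f \<le> (2 * R / d) * V + (4 * R^2 / d) * Gr R f" .
  have "V = (1 / R) * (R * V)" using R by simp
  also have "\<dots> \<le> (1 / R) * ((3/2 * d) * L2 R f + 2 * R^2 * Gr R f)"
    using V(4) R unfolding d_def by (intro mult_left_mono) auto
  also have "\<dots> = (3 * d / (2 * R)) * L2 R f + 2 * R * Gr R f" using R by (simp add: algebra_simps power2_eq_square)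
  finally have 2: "V \<le> (3 * d / (2 * R)) * L2 R f + 2 * R * Gr R f" .
  show ?thesis using V 1 2 unfolding d_def by blast
qed

lemma lower_comb:
  fixes k \<alpha> a b :: real
  assumes "0 < k" "0 < \<alpha>" "0 < a" "0 \<le> b"
  shows "\<exists>c>0. \<forall>L G F V E. 0 \<le> V \<longrightarrow> 0 \<le> G \<longrightarrow> 0 \<le> F \<longrightarrow> L \<le> a * V + b * G \<longrightarrow>
            k * (G + F) + \<alpha> * V \<le> E \<longrightarrow> c * (L + G + F) \<le> E"
proof -
  define c where "c = min (k / (1 + b)) (\<alpha> / a)"
  have c0: "c > 0" unfolding c_def using assms by simp
  have ca: "c * a \<le> \<alpha>" unfolding c_def using assms by (simp add: min_def pos_le_divide_eq field_simps)
  have "c \<le> k / (1 + b)" unfolding c_def by simp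
  then have cb: "c * (1 + b) \<le> k" using assms by (simp add: pos_le_divide_eq)
  have ck: "c \<le> k" using cb c0 assms by (smt (verit) mult_le_cancel_left1)
  show ?thesis
  proof (intro exI[of _ c] conjI allI impI c0)
    fix L G F V E :: real
    assume V: "0 \<le> V" and G: "0 \<le> G" and F: "0 \<le> F" and L: "L \<le> a * V + b * G"
      and E: "k * (G + F) + \<alpha> * V \<le> E"
    have h1: "c * L \<le> c * (a * V + b * G)" using L c0 by (intro mult_left_mono) auto
    have h2: "(c * a) * V \<le> \<alpha> * V" using ca V by (rule mult_right_mono)
    have h3: "(c * (1 + b)) * G \<le> k * G" using cb G by (rule mult_right_mono)
    have h4: "c * F \<le> k * F" using ck F by (rule mult_right_mono)
    show "c * (L + G + F) \<le> E"
      using h1 h2 h3 h4 E by (simp add: algebra_simps)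
  qed
qed

lemma upper_lin:
  fixes X Y Z E p q r :: real
  assumes "0 \<le> X" "0 \<le> Y" "0 \<le> Z" "0 \<le> p" "0 \<le> q" "0 \<le> r" "E \<le> p * X + q * Y + r * Z"
  shows "E \<le> (p + q + r + 1) * (X + Y + Z)"
proof -
  have "p * X \<le> (p + q + r + 1) * X" using assms by (intro mult_right_mono) auto
  moreover have "q * Y \<le> (p + q + r + 1) * Y" using assms by (intro mult_right_mono) auto
  moreover have "r * Z \<le> (p + q + r + 1) * Z" using assms by (intro mult_right_mono) auto
  ultimately show ?thesis using assms(7) by (simp add: distrib_left)
qed

lemma main_ind:
  fixes eps :: "nat \<Rightarrow> real" and R :: real
  assumes R: "R > 0" and eps: "\<forall>j. 1 \<le> j \<and> real j < real CARD('n::finite) / 2 + 1 \<longrightarrow> eps j > 0"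
  shows "\<exists>c C. c > 0 \<and> C > 0 \<and> (\<forall>f1 f2 :: real^'n \<Rightarrow> complex. smooth_cball R f1 \<and> smooth_cball R f2 \<longrightarrow>
     c * (H2 R (Suc m) f1 + H2 R m f2) \<le> Re (Eform eps R (Suc m) (f1, f2) (f1, f2)) \<and>
     Re (Eform eps R (Suc m) (f1, f2) (f1, f2)) \<le> C * (H2 R (Suc m) f1 + H2 R m f2))"
proof (induction m)
  case 0
  define d where "d = real CARD('n)"
  have d: "d > 0" unfolding d_def by simp
  have e1: "eps 1 > 0" using eps d_def d by auto
  define \<alpha> where "\<alpha> = 2 * eps 1 / R"
  have \<alpha>: "\<alpha> > 0" unfolding \<alpha>_def using e1 R by simp
  define a where "a = 2 * R / d"
  define b where "b = 4 * R^2 / d"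
  have a: "a > 0" unfolding a_def using R d by simp
  have b: "b \<ge> 0" unfolding b_def using d by simp
  obtain c where c: "c > 0" and cP: "\<And>L G F V E. 0 \<le> V \<Longrightarrow> 0 \<le> G \<Longrightarrow> 0 \<le> F \<Longrightarrow> L \<le> a * V + b * G \<Longrightarrow>
            1 * (G + F) + \<alpha> * V \<le> E \<Longrightarrow> c * (L + G + F) \<le> E"
    using lower_comb[of 1 \<alpha> a b] \<alpha> a b by auto
  define a' where "a' = 3 * d / (2 * R)"
  define b' where "b' = 2 * R"
  have a': "a' > 0" unfolding a'_def using R d by simp
  have b': "b' > 0" unfolding b'_def using R by simp
  define C where "C = \<alpha> * a' + (1 + \<alpha> * b') + 1 + 1"
  have C: "C > 0" unfolding C_def using \<alpha> a' b' by (simp add: add_pos_pos)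
  show ?case
  proof (rule exI[of _ c], rule exI[of _ C], intro conjI allI impI c C)
    fix f1 f2 :: "real^'n \<Rightarrow> complex"
    assume sm: "smooth_cball R f1 \<and> smooth_cball R f2"
    obtain V where V: "sphere_int R (\<lambda>x. cnj (f1 x) * f1 x) = complex_of_real V" "0 \<le> V"
      "L2 R f1 \<le> a * V + b * Gr R f1" "V \<le> a' * L2 R f1 + b' * Gr R f1"
      using sphere_bounds[OF R, of f1] sm unfolding a_def b_def a'_def b'_def d_def by blast
    have E: "Re (Eform eps R (Suc 0) (f1, f2) (f1, f2)) = Gr R f1 + L2 R f2 + \<alpha> * V"
      unfolding \<alpha>_def using E1_re[of R f1 V eps f2] sm V(1) by simp
    have H: "H2 R (Suc 0) f1 + H2 R 0 f2 = L2 R f1 + Gr R f1 + L2 R f2"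
      by (simp add: H2_Suc H2_0 Gr_def)
    have G0: "0 \<le> Gr R f1" unfolding Gr_def by (intro sum_nonneg L2_nonneg)
    show "c * (H2 R (Suc 0) f1 + H2 R 0 f2) \<le> Re (Eform eps R (Suc 0) (f1, f2) (f1, f2))"
      unfolding H E by (rule cP[OF V(2) G0 L2_nonneg V(3)]) simp
    have "\<alpha> * V \<le> \<alpha> * (a' * L2 R f1 + b' * Gr R f1)" using V(4) \<alpha> by (intro mult_left_mono) auto
    then have "Re (Eform eps R (Suc 0) (f1, f2) (f1, f2)) \<le> (\<alpha> * a') * L2 R f1 + (1 + \<alpha> * b') * Gr R f1 + 1 * L2 R f2"
      unfolding E by (simp add: algebra_simps)
    then have "Re (Eform eps R (Suc 0) (f1, f2) (f1, f2)) \<le> C * (L2 R f1 + Gr R f1 + L2 R f2)"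
      unfolding C_def using \<alpha> a' b' G0 by (intro upper_lin) (auto intro: L2_nonneg)
    then show "Re (Eform eps R (Suc 0) (f1, f2) (f1, f2)) \<le> C * (H2 R (Suc 0) f1 + H2 R 0 f2)"
      by (simp only: H)
  qed
next
  case (Suc m)
  from Suc.IH obtain c' C' where c': "c' > 0" and C': "C' > 0" and
    IHP: "\<And>f1 f2 :: real^'n \<Rightarrow> complex. smooth_cball R f1 \<Longrightarrow> smooth_cball R f2 \<Longrightarrow>
       c' * (H2 R (Suc m) f1 + H2 R m f2) \<le> Re (Eform eps R (Suc m) (f1, f2) (f1, f2)) \<and>
       Re (Eform eps R (Suc m) (f1, f2) (f1, f2)) \<le> C' * (H2 R (Suc m) f1 + H2 R m f2)"
    by blast
  define d where "d = real CARD('n)"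
  have d: "d > 0" unfolding d_def by simp
  have common: "Re (Eform eps R (Suc (Suc m)) (f1, f2) (f1, f2)) =
       Re (Eform eps R (Suc m) (f2, laplacian f1) (f2, laplacian f1))
     + (\<Sum>i\<in>UNIV. Re (Eform eps R (Suc m) (pd i f1, pd i f2) (pd i f1, pd i f2)))
     + (if real (Suc (Suc m)) < real CARD('n) / 2 + 1
       then (2 * eps (Suc (Suc m)) / R) * Re (sphere_int R (\<lambda>x. cnj (f1 x) * f1 x))
       else Re (Eform eps R (Suc m) (f1, f2) (f1, f2)))
     \<and> c' * H2 R (Suc m) f2 \<le> Re (Eform eps R (Suc m) (f2, laplacian f1) (f2, laplacian f1))
     \<and> Re (Eform eps R (Suc m) (f2, laplacian f1) (f2, laplacian f1)) \<le> C' * H2 R (Suc m) f2 + (C' * d) * L2 R f1 + (C' * d) * (\<Sum>i\<in>UNIV. H2 R (Suc m) (pd i f1))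
     \<and> c' * (\<Sum>i\<in>UNIV. H2 R (Suc m) (pd i f1)) \<le> (\<Sum>i\<in>UNIV. Re (Eform eps R (Suc m) (pd i f1, pd i f2) (pd i f1, pd i f2)))
     \<and> (\<Sum>i\<in>UNIV. Re (Eform eps R (Suc m) (pd i f1, pd i f2) (pd i f1, pd i f2))) \<le> C' * (\<Sum>i\<in>UNIV. H2 R (Suc m) (pd i f1)) + C' * H2 R (Suc m) f2
     \<and> H2 R (Suc (Suc m)) f1 = L2 R f1 + (\<Sum>i\<in>UNIV. H2 R (Suc m) (pd i f1))"
    if s1: "smooth_cball R f1" and s2: "smooth_cball R f2" for f1 f2 :: "real^'n \<Rightarrow> complex"
  proof -
    have eqE: "Re (Eform eps R (Suc (Suc m)) (f1, f2) (f1, f2)) =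
       Re (Eform eps R (Suc m) (f2, laplacian f1) (f2, laplacian f1))
     + (\<Sum>i\<in>UNIV. Re (Eform eps R (Suc m) (pd i f1, pd i f2) (pd i f1, pd i f2)))
     + (if real (Suc (Suc m)) < real CARD('n) / 2 + 1
       then (2 * eps (Suc (Suc m)) / R) * Re (sphere_int R (\<lambda>x. cnj (f1 x) * f1 x))
       else Re (Eform eps R (Suc m) (f1, f2) (f1, f2)))"
      using E2_re[of eps R m "(f1, f2)"] by (simp add: D0_def Di_def)
    note I0 = IHP[OF s2 smooth_laplacian[OF s1]]
    have Ii: "c' * (H2 R (Suc m) (pd i f1) + H2 R m (pd i f2)) \<le> Re (Eform eps R (Suc m) (pd i f1, pd i f2) (pd i f1, pd i f2)) \<and>
       Re (Eform eps R (Suc m) (pd i f1, pd i f2) (pd i f1, pd i f2)) \<le> C' * (H2 R (Suc m) (pd i f1) + H2 R m (pd i f2))" for i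
      by (rule IHP[OF smooth_pd[OF s1] smooth_pd[OF s2]])
    define P where "P = (\<Sum>i\<in>UNIV. H2 R (Suc m) (pd i f1))"
    define Q where "Q = (\<Sum>i\<in>UNIV. H2 R m (pd i f2))"
    have HS: "H2 R (Suc (Suc m)) f1 = L2 R f1 + P" unfolding P_def by (rule H2_Suc)
    have QF: "Q \<le> H2 R (Suc m) f2" unfolding Q_def by (rule sum_H2_pd_le)
    have Q0: "0 \<le> Q" unfolding Q_def by (intro sum_nonneg H2_nonneg)
    have Lap: "H2 R m (laplacian f1) \<le> d * (L2 R f1 + P)"
      using H2_laplacian[OF s1, of m] HS unfolding d_def by simp
    have lo0: "c' * H2 R (Suc m) f2 \<le> Re (Eform eps R (Suc m) (f2, laplacian f1) (f2, laplacian f1))"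
    proof -
      have "c' * H2 R (Suc m) f2 \<le> c' * (H2 R (Suc m) f2 + H2 R m (laplacian f1))"
        using c' H2_nonneg[of R m "laplacian f1"] by (intro mult_left_mono) auto
      then show ?thesis using I0 by linarith
    qed
    have up0: "Re (Eform eps R (Suc m) (f2, laplacian f1) (f2, laplacian f1)) \<le> C' * H2 R (Suc m) f2 + (C' * d) * L2 R f1 + (C' * d) * P"
    proof -
      have "C' * (H2 R (Suc m) f2 + H2 R m (laplacian f1)) \<le> C' * (H2 R (Suc m) f2 + d * (L2 R f1 + P))"
        using C' Lap by (intro mult_left_mono) auto
      then show ?thesis using I0 by (simp add: algebra_simps)
    qed
    have loS: "c' * P \<le> (\<Sum>i\<in>UNIV. Re (Eform eps R (Suc m) (pd i f1, pd i f2) (pd i f1, pd i f2)))"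
    proof -
      have "c' * P \<le> (\<Sum>i\<in>UNIV. c' * (H2 R (Suc m) (pd i f1) + H2 R m (pd i f2)))"
        unfolding P_def sum_distrib_left
        using c' by (intro sum_mono mult_left_mono) (auto intro: H2_nonneg)
      also have "\<dots> \<le> (\<Sum>i\<in>UNIV. Re (Eform eps R (Suc m) (pd i f1, pd i f2) (pd i f1, pd i f2)))"
        using Ii by (intro sum_mono) blast
      finally show ?thesis .
    qed
    have upS: "(\<Sum>i\<in>UNIV. Re (Eform eps R (Suc m) (pd i f1, pd i f2) (pd i f1, pd i f2))) \<le> C' * P + C' * H2 R (Suc m) f2"
    proof -
      have "(\<Sum>i\<in>UNIV. Re (Eform eps R (Suc m) (pd i f1, pd i f2) (pd i f1, pd i f2)))
          \<le> (\<Sum>i\<in>UNIV. C' * (H2 R (Suc m) (pd i f1) + H2 R m (pd i f2)))"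
        using Ii by (intro sum_mono) blast
      also have "\<dots> = C' * P + C' * Q" unfolding P_def Q_def by (simp add: sum_distrib_left sum.distrib distrib_left)
      also have "\<dots> \<le> C' * P + C' * H2 R (Suc m) f2" using QF C' by simp
      finally show ?thesis .
    qed
    show ?thesis using eqE lo0 up0 loS upS HS unfolding P_def by blast
  qed
  show ?case
  proof (cases "real (Suc (Suc m)) < real CARD('n) / 2 + 1")
    case True
    have e1: "eps (Suc (Suc m)) > 0" using eps True by auto
    define \<alpha> where "\<alpha> = 2 * eps (Suc (Suc m)) / R"
    have \<alpha>: "\<alpha> > 0" unfolding \<alpha>_def using e1 R by simp
    define a where "a = 2 * R / d"
    define b where "b = 4 * R^2 / d"
    have a: "a > 0" unfolding a_def using R d by simp
    have b: "b \<ge> 0" unfolding b_def using d by simp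
    obtain c where c: "c > 0" and cP: "\<And>L G F V E. 0 \<le> V \<Longrightarrow> 0 \<le> G \<Longrightarrow> 0 \<le> F \<Longrightarrow> L \<le> a * V + b * G \<Longrightarrow>
            c' * (G + F) + \<alpha> * V \<le> E \<Longrightarrow> c * (L + G + F) \<le> E"
      using lower_comb[of c' \<alpha> a b] \<alpha> a b c' by auto
    define a' where "a' = 3 * d / (2 * R)"
    define b' where "b' = 2 * R"
    have a': "a' > 0" unfolding a'_def using R d by simp
    have b': "b' > 0" unfolding b'_def using R by simp
    define p where "p = C' * d + \<alpha> * a'"
    define q where "q = C' * d + C' + \<alpha> * b'"
    define r where "r = 2 * C'"
    have pqr: "p \<ge> 0" "q \<ge> 0" "r \<ge> 0" unfolding p_def q_def r_def using C' d \<alpha> a' b' by auto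
    define C where "C = p + q + r + 1"
    have C: "C > 0" unfolding C_def using pqr by simp
    show ?thesis
    proof (rule exI[of _ c], rule exI[of _ C], intro conjI allI impI c C)
      fix f1 f2 :: "real^'n \<Rightarrow> complex"
      assume sm: "smooth_cball R f1 \<and> smooth_cball R f2"
      then have s1: "smooth_cball R f1" and s2: "smooth_cball R f2" by auto
      note cm = common[OF s1 s2]
      define P where "P = (\<Sum>i\<in>UNIV. H2 R (Suc m) (pd i f1))"
      have P0: "0 \<le> P" unfolding P_def by (intro sum_nonneg H2_nonneg)
      have GP: "Gr R f1 \<le> P" unfolding P_def by (rule Gr_le)
      have G0: "0 \<le> Gr R f1" unfolding Gr_def by (intro sum_nonneg L2_nonneg)
      obtain V where V: "sphere_int R (\<lambda>x. cnj (f1 x) * f1 x) = complex_of_real V" "0 \<le> V"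
        "L2 R f1 \<le> a * V + b * Gr R f1" "V \<le> a' * L2 R f1 + b' * Gr R f1"
        using sphere_bounds[OF R s1] unfolding a_def b_def a'_def b'_def d_def by blast
      have E: "Re (Eform eps R (Suc (Suc m)) (f1, f2) (f1, f2)) =
         Re (Eform eps R (Suc m) (f2, laplacian f1) (f2, laplacian f1))
       + (\<Sum>i\<in>UNIV. Re (Eform eps R (Suc m) (pd i f1, pd i f2) (pd i f1, pd i f2))) + \<alpha> * V"
        using cm True V(1) unfolding \<alpha>_def by simp
      have F0: "0 \<le> H2 R (Suc m) f2" by (rule H2_nonneg)
      have LbP: "L2 R f1 \<le> a * V + b * P"
      proof -
        have "b * Gr R f1 \<le> b * P" using GP b by (rule mult_left_mono)
        then show ?thesis using V(3) by linarith
      qed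
      have "c * (L2 R f1 + P + H2 R (Suc m) f2) \<le> Re (Eform eps R (Suc (Suc m)) (f1, f2) (f1, f2))"
      proof (rule cP[OF V(2) P0 F0 LbP])
        show "c' * (P + H2 R (Suc m) f2) + \<alpha> * V \<le> Re (Eform eps R (Suc (Suc m)) (f1, f2) (f1, f2))"
          using E cm unfolding P_def by (simp add: algebra_simps)
      qed
      then show "c * (H2 R (Suc (Suc m)) f1 + H2 R (Suc m) f2) \<le> Re (Eform eps R (Suc (Suc m)) (f1, f2) (f1, f2))"
        using cm unfolding P_def by (simp add: add.assoc)
      have aV: "\<alpha> * V \<le> (\<alpha> * a') * L2 R f1 + (\<alpha> * b') * P"
      proof -
        have "\<alpha> * V \<le> \<alpha> * (a' * L2 R f1 + b' * Gr R f1)" using V(4) \<alpha> by (intro mult_left_mono) auto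
        moreover have "\<alpha> * b' * Gr R f1 \<le> \<alpha> * b' * P" using GP \<alpha> b' by (intro mult_left_mono) auto
        ultimately show ?thesis by (simp add: algebra_simps)
      qed
      have "Re (Eform eps R (Suc (Suc m)) (f1, f2) (f1, f2)) \<le> p * L2 R f1 + q * P + r * H2 R (Suc m) f2"
        using E cm aV unfolding p_def q_def r_def P_def by (simp add: algebra_simps)
      then have "Re (Eform eps R (Suc (Suc m)) (f1, f2) (f1, f2)) \<le> C * (L2 R f1 + P + H2 R (Suc m) f2)"
        unfolding C_def by (rule upper_lin[OF L2_nonneg P0 F0 pqr])
      then show "Re (Eform eps R (Suc (Suc m)) (f1, f2) (f1, f2)) \<le> C * (H2 R (Suc (Suc m)) f1 + H2 R (Suc m) f2)"
        using cm unfolding P_def by (simp add: add.assoc)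
    qed
  next
    case False
    define p where "p = C' * d + C'"
    define q where "q = C' * d + 2 * C'"
    define r where "r = 3 * C'"
    have pqr: "p \<ge> 0" "q \<ge> 0" "r \<ge> 0" unfolding p_def q_def r_def using C' d by auto
    define C where "C = p + q + r + 1"
    have C: "C > 0" unfolding C_def using pqr by simp
    show ?thesis
    proof (rule exI[of _ c'], rule exI[of _ C], intro conjI allI impI c' C)
      fix f1 f2 :: "real^'n \<Rightarrow> complex"
      assume sm: "smooth_cball R f1 \<and> smooth_cball R f2"
      then have s1: "smooth_cball R f1" and s2: "smooth_cball R f2" by auto
      note cm = common[OF s1 s2]
      note I1 = IHP[OF s1 s2]
      define P where "P = (\<Sum>i\<in>UNIV. H2 R (Suc m) (pd i f1))"
      have P0: "0 \<le> P" unfolding P_def by (intro sum_nonneg H2_nonneg)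
      have F0: "0 \<le> H2 R (Suc m) f2" by (rule H2_nonneg)
      have E: "Re (Eform eps R (Suc (Suc m)) (f1, f2) (f1, f2)) =
         Re (Eform eps R (Suc m) (f2, laplacian f1) (f2, laplacian f1))
       + (\<Sum>i\<in>UNIV. Re (Eform eps R (Suc m) (pd i f1, pd i f2) (pd i f1, pd i f2)))
       + Re (Eform eps R (Suc m) (f1, f2) (f1, f2))"
        using cm False by simp
      have lX: "c' * L2 R f1 \<le> Re (Eform eps R (Suc m) (f1, f2) (f1, f2))"
      proof -
        have "c' * L2 R f1 \<le> c' * (H2 R (Suc m) f1 + H2 R m f2)"
          using c' L2_le_H2[of R f1 "Suc m"] H2_nonneg[of R m f2] by (intro mult_left_mono) auto
        then show ?thesis using I1 by linarith
      qed
      have "c' * (L2 R f1 + P + H2 R (Suc m) f2) \<le> Re (Eform eps R (Suc (Suc m)) (f1, f2) (f1, f2))"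
        using E cm lX unfolding P_def by (simp add: algebra_simps)
      then show "c' * (H2 R (Suc (Suc m)) f1 + H2 R (Suc m) f2) \<le> Re (Eform eps R (Suc (Suc m)) (f1, f2) (f1, f2))"
        using cm unfolding P_def by (simp add: add.assoc)
      have uX: "Re (Eform eps R (Suc m) (f1, f2) (f1, f2)) \<le> C' * (L2 R f1 + P) + C' * H2 R (Suc m) f2"
      proof -
        have h1: "H2 R (Suc m) f1 \<le> L2 R f1 + P" using H2_mono[of R "Suc m" f1] cm unfolding P_def by simp
        have h2: "H2 R m f2 \<le> H2 R (Suc m) f2" by (rule H2_mono)
        have "C' * (H2 R (Suc m) f1 + H2 R m f2) \<le> C' * ((L2 R f1 + P) + H2 R (Suc m) f2)"
          using h1 h2 C' by (intro mult_left_mono) auto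
        then show ?thesis using I1 by (simp add: algebra_simps)
      qed
      have "Re (Eform eps R (Suc (Suc m)) (f1, f2) (f1, f2)) \<le> p * L2 R f1 + q * P + r * H2 R (Suc m) f2"
        using E cm uX unfolding p_def q_def r_def P_def by (simp add: algebra_simps)
      then have "Re (Eform eps R (Suc (Suc m)) (f1, f2) (f1, f2)) \<le> C * (L2 R f1 + P + H2 R (Suc m) f2)"
        unfolding C_def by (rule upper_lin[OF L2_nonneg P0 F0 pqr])
      then show "Re (Eform eps R (Suc (Suc m)) (f1, f2) (f1, f2)) \<le> C * (H2 R (Suc (Suc m)) f1 + H2 R (Suc m) f2)"
        using cm unfolding P_def by (simp add: add.assoc)
    qed
  qed
qed

theorem mainTheorem4:
  fixes eps :: "nat \<Rightarrow> real" and R :: real and k :: nat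
  assumes "R > 0" and "k \<ge> 1"
    and "\<forall>j. 1 \<le> j \<and> real j < real CARD('n::finite) / 2 + 1 \<longrightarrow> eps j > 0"
  shows "\<exists>c C. c > 0 \<and> C > 0 \<and>
    (\<forall>f1 f2 :: real^'n \<Rightarrow> complex. smooth_cball R f1 \<and> smooth_cball R f2 \<longrightarrow>
       c * HHnorm R k (f1, f2) \<le> Enorm eps R k (f1, f2) \<and>
       Enorm eps R k (f1, f2) \<le> C * HHnorm R k (f1, f2))"
proof -
  obtain m where k: "k = Suc m" using assms(2) by (cases k) auto
  obtain c C where c: "c > 0" and C: "C > 0" and P: "\<And>f1 f2 :: real^'n \<Rightarrow> complex. smooth_cball R f1 \<and> smooth_cball R f2 \<Longrightarrow>
     c * (H2 R (Suc m) f1 + H2 R m f2) \<le> Re (Eform eps R (Suc m) (f1, f2) (f1, f2)) \<and>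
     Re (Eform eps R (Suc m) (f1, f2) (f1, f2)) \<le> C * (H2 R (Suc m) f1 + H2 R m f2)"
    using main_ind[OF assms(1) assms(3), of m] by blast
  show ?thesis
  proof (rule exI[of _ "sqrt c"], rule exI[of _ "sqrt C"], intro conjI allI impI)
    show "sqrt c > 0" "sqrt C > 0" using c C by auto
    fix f1 f2 :: "real^'n \<Rightarrow> complex"
    assume sm: "smooth_cball R f1 \<and> smooth_cball R f2"
    define S where "S = H2 R (Suc m) f1 + H2 R m f2"
    have S0: "0 \<le> S" unfolding S_def by (intro add_nonneg_nonneg H2_nonneg)
    have HH: "HHnorm R k (f1, f2) = sqrt S"
      unfolding HHnorm_def Hnorm_H2 S_def k using H2_nonneg[of R "Suc m" f1] H2_nonneg[of R m f2] by simp
    have En: "Enorm eps R k (f1, f2) = sqrt (Re (Eform eps R (Suc m) (f1, f2) (f1, f2)))"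
      unfolding Enorm_def k ..
    have l: "c * S \<le> Re (Eform eps R (Suc m) (f1, f2) (f1, f2))" and u: "Re (Eform eps R (Suc m) (f1, f2) (f1, f2)) \<le> C * S"
      using P[OF sm] unfolding S_def by auto
    show "sqrt c * HHnorm R k (f1, f2) \<le> Enorm eps R k (f1, f2)"
      unfolding HH En real_sqrt_mult[symmetric] using l by simp
    show "Enorm eps R k (f1, f2) \<le> sqrt C * HHnorm R k (f1, f2)"
      unfolding HH En real_sqrt_mult[symmetric] using u by simp
  qed
qed

end
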